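(* Let $\nu$ be a probability measure on $\mathcal{C}_n$ and let $D=\mathbf{GW}(\{g_\nu(y):y\in\mathcal{C}_n\})$. For every $\varepsilon\in(0,1/16)$ and every $\alpha>1$, there exists a measure $m$ supported on $B(0,\varepsilon\sqrt n)\cap[-1,1]^n$ such that $$\int_{\mathcal{C}_n}\varphi\,d\nu=\int_{B(0,\varepsilon\sqrt n)}\left(\int_{\mathcal{C}_n}\varphi\,d(\mathrm{tilt}_\theta\nu)\right)dm(\theta)$$ for every test function $\varphi:\mathcal{C}_n\to\mathbb{R}$, and $$m\left(\theta:\ \mathrm{Tr}_k(\mathcal{H}(\mathrm{tilt}_\theta\nu))\le\frac{2^8\alpha D}{\varepsilon}\right)\ge1-\frac1\alpha-\frac1n,$$ with $k=2ne^{-1/(32\varepsilon^2)}$. Furthermore, under the additional assumption $\varepsilon\le\frac{1}{8\sqrt{\log(4n/D)}}$, the last inequality holds with $k=1$.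
   Context: $\mathcal{C}_n=\{-1,1\}^n$ with uniform probability measure $\mu$. For a probability measure $\rho$ on $\mathcal{C}_n$ with $f=\log\frac{d\rho}{d\mu}$, and $y\in\mathcal{C}_n$, $i\in[n]$, let $y_\pm$ agree with $y$ except the $i$-th coordinate is $\pm1$; $g_\rho(y)\in\mathbb{R}^n$ has $\langle g_\rho(y),e_i\rangle=\frac{e^{f(y_+)}-e^{f(y_-)}}{e^{f(y_+)}+e^{f(y_-)}}$ ($0$ if $\rho(y_+)=\rho(y_-)=0$). $\mathcal{H}(\rho)=\int g_\rho^{\otimes2}d\rho-(\int g_\rho\,d\rho)^{\otimes2}$. For a matrix $A$ whose diagonal entries in decreasing order are $\alpha_1\ge\dots\ge\alpha_n$, $\mathrm{Tr}_k(A)=\sum_{i=\lceil k\rceil}^n\alpha_i$. $\mathbf{GW}(K)=\mathbb{E}\sup_{x\in K}\langle x,\Gamma\rangle$, $\Gamma\sim N(0,\mathrm{Id}_n)$. For $d\nu=e^fd\mu$ and $\theta\in\mathbb{R}^n$, $\frac{d(\mathrm{tilt}_\theta\nu)}{d\mu}(y)=\frac{e^{f(y)+\langle\theta,y\rangle}}{\int e^{f(z)+\langle\theta,z\rangle}d\mu(z)}$. $B(0,r)$ is the Euclidean ball of radius $r$. *)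

theory Defs
  imports "HOL-Probability.Probability"
begin

definition cube :: "(real^'n) set" where
  "cube = {x. \<forall>i. x $ i = -1 \<or> x $ i = 1}"

definition unit_box :: "(real^'n) set" where
  "unit_box = {x. \<forall>i. -1 \<le> x $ i \<and> x $ i \<le> 1}"

definition upd_coord :: "real^'n \<Rightarrow> 'n \<Rightarrow> real \<Rightarrow> real^'n" where
  "upd_coord y i s = (\<chi> j. if j = i then s else y $ j)"

text \<open>g_rho for a (probability) mass function rho on the cube; since e^f = 2^n rho,
  the ratio (e^f(y+) - e^f(y-))/(e^f(y+) + e^f(y-)) equals the ratio of masses.\<close>
definition gvec :: "(real^'n \<Rightarrow> real) \<Rightarrow> real^'n \<Rightarrow> real^'n" where
  "gvec \<rho> y = (\<chi> i. let a = \<rho> (upd_coord y i 1); b = \<rho> (upd_coord y i (-1))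
      in if a = 0 \<and> b = 0 then 0 else (a - b) / (a + b))"

definition Hcov :: "(real^'n \<Rightarrow> real) \<Rightarrow> real^'n^'n" where
  "Hcov \<rho> = (\<chi> i j. (\<Sum>y\<in>cube. \<rho> y * (gvec \<rho> y $ i) * (gvec \<rho> y $ j))
      - (\<Sum>y\<in>cube. \<rho> y * (gvec \<rho> y $ i)) * (\<Sum>y\<in>cube. \<rho> y * (gvec \<rho> y $ j)))"

definition Trk :: "real \<Rightarrow> real^'n^'n \<Rightarrow> real" where
  "Trk k A = (let L = rev (sorted_list_of_multiset (image_mset (\<lambda>i. A $ i $ i) (mset_set (UNIV :: 'n set))))
     in \<Sum>j\<in>{j\<in>{1..CARD('n)}. \<lceil>k\<rceil> \<le> int j}. L ! (j - 1))"

definition std_gauss :: "(real^'n) measure" where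
  "std_gauss = density lborel (\<lambda>x. ennreal (\<Prod>i\<in>UNIV. std_normal_density (x $ i)))"

definition GW :: "(real^'n) set \<Rightarrow> real" where
  "GW K = (\<integral>\<Gamma>. (SUP x\<in>K. x \<bullet> \<Gamma>) \<partial>std_gauss)"

text \<open>Mass function of tilt_theta nu (the normalisation by mu cancels).\<close>
definition tilt :: "real^'n \<Rightarrow> (real^'n \<Rightarrow> real) \<Rightarrow> real^'n \<Rightarrow> real" where
  "tilt \<theta> \<rho> y = (if y \<in> cube
      then \<rho> y * exp (\<theta> \<bullet> y) / (\<Sum>z\<in>cube. \<rho> z * exp (\<theta> \<bullet> z)) else 0)"

end

theory Submission
  imports Defs
begin


lemma upd_coord_nth[simp]: "upd_coord y i s $ j = (if j = i then s else y $ j)"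
  by (simp add: upd_coord_def)

lemma upd_coord_upd[simp]: "upd_coord (upd_coord y i s) i r = upd_coord y i r"
  by (simp add: upd_coord_def vec_eq_iff)

lemma upd_coord_same: "y $ i = s \<Longrightarrow> upd_coord y i s = y"
  by (simp add: upd_coord_def vec_eq_iff)

lemma cube_nth: "y \<in> cube \<Longrightarrow> y $ i = -1 \<or> y $ i = 1"
  by (simp add: cube_def)

lemma cube_nth_sq: "y \<in> cube \<Longrightarrow> y $ i * y $ i = 1"
  using cube_nth[of y i] by auto

lemma cube_abs: "y \<in> cube \<Longrightarrow> \<bar>y $ i\<bar> = 1"
  using cube_nth[of y i] by auto

lemma upd_coord_cube: "y \<in> cube \<Longrightarrow> s = -1 \<or> s = 1 \<Longrightarrow> upd_coord y i s \<in> cube"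
  by (auto simp: cube_def)

lemma cube_eq: "cube = (\<lambda>f. \<chi> i. f i) ` (PiE UNIV (\<lambda>_. {-1,1::real}))"
proof
  show "cube \<subseteq> (\<lambda>f. \<chi> i. f i) ` (PiE UNIV (\<lambda>_. {-1,1::real}))"
    by (auto simp: cube_def intro!: image_eqI[where x="\<lambda>i. _ $ i"])
  show "(\<lambda>f. \<chi> i. f i) ` (PiE UNIV (\<lambda>_. {-1,1::real})) \<subseteq> cube"
    by (auto simp: cube_def PiE_def Pi_def)
qed

lemma finite_cube[simp]: "finite cube"
  unfolding cube_eq by (intro finite_imageI finite_PiE) auto

lemma cube_prod_sum:
  fixes h :: "'n::finite \<Rightarrow> real \<Rightarrow> real"
  shows "(\<Sum>x\<in>cube. \<Prod>i\<in>UNIV. h i (x $ i)) = (\<Prod>i\<in>UNIV. h i 1 + h i (-1))"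
proof -
  have inj: "inj_on (\<lambda>f. \<chi> i. f i) (PiE UNIV (\<lambda>_. {-1,1::real}))"
    by (auto simp: inj_on_def vec_eq_iff fun_eq_iff)
  have "(\<Sum>x\<in>cube. \<Prod>i\<in>UNIV. h i (x $ i)) = (\<Sum>f\<in>PiE UNIV (\<lambda>_. {-1,1::real}). \<Prod>i\<in>UNIV. h i (f i))"
    unfolding cube_eq by (subst sum.reindex[OF inj]) simp
  also have "\<dots> = (\<Prod>i\<in>UNIV. \<Sum>s\<in>{-1,1}. h i s)"
    by (rule prod_sum_PiE[symmetric]) auto
  also have "\<dots> = (\<Prod>i\<in>UNIV. h i 1 + h i (-1))" by (simp add: add.commute)
  finally show ?thesis .
qed

definition flipc :: "'n \<Rightarrow> real^'n \<Rightarrow> real^'n" where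
  "flipc i y = upd_coord y i (- (y $ i))"

lemma flipc_flipc[simp]: "flipc i (flipc i y) = y"
  by (simp add: flipc_def upd_coord_def vec_eq_iff)

lemma flipc_cube: "y \<in> cube \<Longrightarrow> flipc i y \<in> cube"
  unfolding flipc_def using cube_nth[of y i] by (intro upd_coord_cube) auto

lemma flipc_nth[simp]: "flipc i y $ j = (if j = i then - (y $ i) else y $ j)"
  by (simp add: flipc_def)

lemma upd_coord_flipc[simp]: "upd_coord (flipc i y) i s = upd_coord y i s"
  by (simp add: flipc_def)

lemma sum_cube_flip: "(\<Sum>y\<in>cube. F y) = (\<Sum>y\<in>cube. F (flipc i y))"
proof -
  have b: "bij_betw (flipc i) cube cube"
    by (rule bij_betwI[of _ _ _ "flipc i"]) (auto intro: flipc_cube)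
  show ?thesis by (rule sum.reindex_bij_betw[OF b, symmetric])
qed



lemma vec_sum_basis_nth:
  fixes f :: "(real^'n) \<Rightarrow> real"
  shows "(\<Sum>b\<in>Basis. f b *\<^sub>R b) $ j = f (axis j 1)"
proof -
  have "(\<Sum>b\<in>Basis. f b *\<^sub>R b) $ j = (\<Sum>b\<in>Basis. f b * (b $ j))"
    by (simp add: sum_component)
  also have "\<dots> = (\<Sum>b\<in>Basis. f b * (b \<bullet> axis j 1))"
    by (simp add: cart_eq_inner_axis)
  also have "\<dots> = f (axis j 1)"
    by (subst sum.remove[of _ "axis j 1"]) (auto simp: Basis_vec_def inner_axis_axis axis_eq_axis intro!: sum.neutral split: if_splits)
  finally show ?thesis .
qed

lemma lborel_vec_prod:
  fixes \<psi> :: "'n::finite \<Rightarrow> real \<Rightarrow> real"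
  assumes int: "\<And>j. integrable lborel (\<psi> j)"
  shows "integrable (lborel :: (real^'n) measure) (\<lambda>x. \<Prod>j\<in>UNIV. \<psi> j (x$j))"
    "(\<integral>x. (\<Prod>j\<in>UNIV. \<psi> j (x$j)) \<partial>(lborel :: (real^'n) measure)) = (\<Prod>j\<in>UNIV. integral\<^sup>L lborel (\<psi> j))"
proof -
  define ax :: "'n \<Rightarrow> real^'n" where "ax = (\<lambda>j. axis j 1)"
  have inj: "inj ax" by (auto simp: ax_def inj_def axis_eq_axis)
  have img: "ax ` UNIV = Basis" by (auto simp: ax_def Basis_vec_def)
  define \<psi>' where "\<psi>' = (\<lambda>b. \<psi> (inv ax b))"
  interpret P: product_sigma_finite "\<lambda>_::real^'n. (lborel::real measure)" by standard
  have T: "(\<lambda>f. \<Sum>b\<in>Basis. f b *\<^sub>R (b::real^'n)) \<in> borel_measurable (\<Pi>\<^sub>M b\<in>Basis. (lborel::real measure))"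
    by measurable
  have eq: "(\<Prod>j\<in>UNIV. \<psi> j ((\<Sum>b\<in>Basis. f b *\<^sub>R b) $ j)) = (\<Prod>b\<in>Basis. \<psi>' b (f b))" for f :: "real^'n \<Rightarrow> real"
  proof -
    have "(\<Prod>b\<in>Basis. \<psi>' b (f b)) = (\<Prod>j\<in>UNIV. \<psi>' (ax j) (f (ax j)))"
      unfolding img[symmetric] by (subst prod.reindex[OF inj]) simp
    also have "\<dots> = (\<Prod>j\<in>UNIV. \<psi> j ((\<Sum>b\<in>Basis. f b *\<^sub>R b) $ j))"
      unfolding vec_sum_basis_nth \<psi>'_def using inv_f_f[OF inj] by (simp add: ax_def)
    finally show ?thesis by simp
  qed
  have ip: "integrable (\<Pi>\<^sub>M b\<in>Basis. (lborel::real measure)) (\<lambda>f. \<Prod>b\<in>Basis. \<psi>' b (f b))"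
    by (rule P.product_integrable_prod) (auto simp: \<psi>'_def int)
  have mj: "\<psi> j \<in> borel_measurable borel" for j
    using borel_measurable_integrable[OF int[of j]] by simp
  have mG: "(\<lambda>x::real^'n. \<Prod>j\<in>UNIV. \<psi> j (x$j)) \<in> borel_measurable borel"
    using mj by measurable
  show "integrable (lborel :: (real^'n) measure) (\<lambda>x. \<Prod>j\<in>UNIV. \<psi> j (x$j))"
    apply (subst lborel_eq)
    apply (subst integrable_distr_eq[OF T mG])
    unfolding eq by (rule ip)
  show "(\<integral>x. (\<Prod>j\<in>UNIV. \<psi> j (x$j)) \<partial>(lborel :: (real^'n) measure)) = (\<Prod>j\<in>UNIV. integral\<^sup>L lborel (\<psi> j))"
    apply (subst lborel_eq)
    apply (subst integral_distr[OF T mG])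
    unfolding eq
    apply (subst P.product_integral_prod)
      apply (auto simp: \<psi>'_def int)[2]
    unfolding img[symmetric] \<psi>'_def
    apply (subst prod.reindex[OF inj])
    using inv_f_f[OF inj] by simp
qed

lemma gauss_prod:
  fixes h :: "'n::finite \<Rightarrow> real \<Rightarrow> real"
  assumes meas: "\<And>j. h j \<in> borel_measurable borel"
    and int: "\<And>j. integrable lborel (\<lambda>u. std_normal_density u * h j u)"
  shows "integrable (std_gauss :: (real^'n) measure) (\<lambda>x. \<Prod>j\<in>UNIV. h j (x$j))"
    "(\<integral>x. (\<Prod>j\<in>UNIV. h j (x$j)) \<partial>(std_gauss :: (real^'n) measure)) = (\<Prod>j\<in>UNIV. \<integral>u. std_normal_density u * h j u \<partial>lborel)"
proof -
  have md: "(\<lambda>x::real^'n. \<Prod>i\<in>UNIV. std_normal_density (x $ i)) \<in> borel_measurable lborel"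
    by measurable
  have mh: "(\<lambda>x::real^'n. \<Prod>j\<in>UNIV. h j (x$j)) \<in> borel_measurable lborel"
    using meas by measurable
  have nn: "AE x in lborel. 0 \<le> (\<Prod>i\<in>UNIV. std_normal_density ((x::real^'n) $ i))"
    by (intro AE_I2 prod_nonneg) auto
  have pr: "(\<Prod>i\<in>UNIV. std_normal_density (x $ i)) *\<^sub>R (\<Prod>j\<in>UNIV. h j (x$j)) =
        (\<Prod>j\<in>UNIV. std_normal_density (x $ j) * h j (x $ j))" for x :: "real^'n"
    by (simp add: prod.distrib)
  show "integrable (std_gauss :: (real^'n) measure) (\<lambda>x. \<Prod>j\<in>UNIV. h j (x$j))"
    unfolding std_gauss_def
    apply (subst integrable_density[OF mh md nn])
    unfolding pr by (rule lborel_vec_prod(1)[OF int])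
  show "(\<integral>x. (\<Prod>j\<in>UNIV. h j (x$j)) \<partial>(std_gauss :: (real^'n) measure)) = (\<Prod>j\<in>UNIV. \<integral>u. std_normal_density u * h j u \<partial>lborel)"
    unfolding std_gauss_def
    apply (subst integral_density[OF mh md nn])
    unfolding pr by (rule lborel_vec_prod(2)[OF int])
qed

definition hs :: "real \<Rightarrow> real \<Rightarrow> real" where
  "hs s u = (if s = 1 then indicator {0..} u else indicator {..<0} u)"

lemma hs_meas[measurable]: "hs s \<in> borel_measurable borel"
  unfolding hs_def by (cases "s = 1") auto

lemma std_normal_even: "std_normal_density (- u) = std_normal_density u"
  by (simp add: std_normal_density_def)

lemma int_hs: "integrable lborel (\<lambda>u. std_normal_density u * hs s u)"
  unfolding hs_def by (cases "s = 1") (auto intro!: integrable_real_mult_indicator)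

lemma int_hs_u: "integrable lborel (\<lambda>u. std_normal_density u * (hs s u * u))"
proof -
  have i: "integrable lborel (\<lambda>u. std_normal_density u * u)"
    using integrable_std_normal_moment[of 1] by simp
  have e: "(\<lambda>u. std_normal_density u * (hs s u * u)) = (\<lambda>u. (std_normal_density u * u) * indicator (if s = 1 then {0..} else {..<0}) u)"
    by (auto simp: hs_def)
  show ?thesis
    unfolding e using i by (intro integrable_real_mult_indicator) auto
qed

lemma half_probs:
  "(\<integral>u. std_normal_density u * indicator {0..} u \<partial>lborel) = 1/2"
  "(\<integral>u. std_normal_density u * indicator {..<0} u \<partial>lborel) = 1/2"
proof -
  define P where "P = (\<integral>u. std_normal_density u * indicator {0..} u \<partial>lborel)"
  define M where "M = (\<integral>u. std_normal_density u * indicator {..<0::real} u \<partial>lborel)"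
  have i1: "integrable lborel (\<lambda>u. std_normal_density u * indicator {0..} u)"
    by (intro integrable_real_mult_indicator) auto
  have i2: "integrable lborel (\<lambda>u. std_normal_density u * indicator {..<0::real} u)"
    by (intro integrable_real_mult_indicator) auto
  have "P + M = (\<integral>u. std_normal_density u * indicator {0..} u + std_normal_density u * indicator {..<0::real} u \<partial>lborel)"
    unfolding P_def M_def by (rule Bochner_Integration.integral_add[OF i1 i2, symmetric])
  also have "\<dots> = (\<integral>u. std_normal_density u \<partial>lborel)"
    by (intro Bochner_Integration.integral_cong) (auto split: split_indicator)
  finally have s: "P + M = 1" by simp
  have "P = \<bar>-1\<bar> *\<^sub>R (\<integral>x. std_normal_density (0 + -1 * x) * indicator {0..} (0 + -1 * x) \<partial>lborel)"
    unfolding P_def by (rule lborel_integral_real_affine) simp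
  also have "\<dots> = (\<integral>x. std_normal_density x * indicator {..0} x \<partial>lborel)"
    by (simp add: std_normal_even indicator_def)
  also have "\<dots> = M"
    unfolding M_def
    by (intro integral_cong_AE) (auto intro!: eventually_mono[OF AE_lborel_singleton[of 0]] split: split_indicator)
  finally have "P = M" .
  with s show "P = 1/2" "M = 1/2" unfolding P_def M_def by auto
qed

lemma half_moments:
  "(\<integral>u. std_normal_density u * (indicator {0..} u * u) \<partial>lborel) = 1 / sqrt (2*pi)"
  "(\<integral>u. std_normal_density u * (indicator {..<0} u * u) \<partial>lborel) = - 1 / sqrt (2*pi)"
proof -
  have ia: "integrable lborel (\<lambda>u. std_normal_density u * \<bar>u\<bar>)"
    using integrable_std_normal_moment_abs[of 1] by simp
  have iu: "integrable lborel (\<lambda>u. std_normal_density u * u)"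
    using integrable_std_normal_moment[of 1] by simp
  have va: "(\<integral>u. std_normal_density u * \<bar>u\<bar> \<partial>lborel) = sqrt (2/pi)"
    using integral_std_normal_moment_abs_odd[of 0] by simp
  have vu: "(\<integral>u. std_normal_density u * u \<partial>lborel) = 0"
    using integral_std_normal_moment_odd[of 0] by simp
  have k: "sqrt (2/pi) / 2 = 1 / sqrt (2*pi)"
    by (simp add: real_sqrt_divide field_simps real_sqrt_mult)
  have "(\<integral>u. std_normal_density u * (indicator {0..} u * u) \<partial>lborel)
     = (\<integral>u. (std_normal_density u * \<bar>u\<bar> + std_normal_density u * u) / 2 \<partial>lborel)"
    by (intro Bochner_Integration.integral_cong) (auto split: split_indicator simp: field_simps)
  also have "\<dots> = ((\<integral>u. std_normal_density u * \<bar>u\<bar> \<partial>lborel) + (\<integral>u. std_normal_density u * u \<partial>lborel)) / 2"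
    using ia iu by simp
  finally show "(\<integral>u. std_normal_density u * (indicator {0..} u * u) \<partial>lborel) = 1 / sqrt (2*pi)"
    using va vu k by simp
  have "(\<integral>u. std_normal_density u * (indicator {..<0} u * u) \<partial>lborel)
     = (\<integral>u. (std_normal_density u * u - std_normal_density u * \<bar>u\<bar>) / 2 \<partial>lborel)"
    by (intro Bochner_Integration.integral_cong) (auto split: split_indicator simp: field_simps)
  also have "\<dots> = ((\<integral>u. std_normal_density u * u \<partial>lborel) - (\<integral>u. std_normal_density u * \<bar>u\<bar> \<partial>lborel)) / 2"
    using ia iu by simp
  finally show "(\<integral>u. std_normal_density u * (indicator {..<0} u * u) \<partial>lborel) = - 1 / sqrt (2*pi)"
    using va vu k by simp
qed

lemma prod_special:
  fixes c :: "'n::finite \<Rightarrow> real"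
  assumes "\<And>j. j \<noteq> i \<Longrightarrow> c j = b"
  shows "(\<Prod>j\<in>UNIV. c j) = c i * b ^ (CARD('n) - 1)"
proof -
  have "(\<Prod>j\<in>UNIV. c j) = c i * (\<Prod>j\<in>UNIV - {i}. c j)"
    by (rule prod.remove) auto
  also have "(\<Prod>j\<in>UNIV - {i}. c j) = (\<Prod>j\<in>UNIV - {i}. b)"
    using assms by (intro prod.cong) auto
  also have "\<dots> = b ^ (CARD('n) - 1)" by (simp add: card_Diff_singleton)
  finally show ?thesis .
qed

lemma hs_int_vals:
  assumes "s = 1 \<or> s = -1"
  shows "(\<integral>u. std_normal_density u * hs s u \<partial>lborel) = 1/2"
    "(\<integral>u. std_normal_density u * (hs s u * u) \<partial>lborel) = s / sqrt (2*pi)"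
  using assms half_probs half_moments by (auto simp: hs_def)

lemma inner_cart: "(x::real^'n) \<bullet> y = (\<Sum>i\<in>UNIV. x $ i * y $ i)"
  by (simp add: inner_vec_def)

lemma GW_lower:
  fixes K :: "(real^'n::finite) set"
  assumes fin: "finite K" and ne: "K \<noteq> {}" and bd: "\<And>k i. k \<in> K \<Longrightarrow> \<bar>k $ i\<bar> \<le> 1"
  shows "sqrt (2/pi) * (\<Sum>\<sigma>\<in>cube. Max ((\<lambda>k. k \<bullet> \<sigma>) ` K)) / 2 ^ CARD('n) \<le> GW K"
proof -
  define S where "S = (\<lambda>v::real^'n. Max ((\<lambda>k. k \<bullet> v) ` K))"
  have GWS: "GW K = (\<integral>v. S v \<partial>std_gauss)"
    unfolding GW_def S_def using fin ne by (simp add: cSup_eq_Max)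
  have Sge: "k \<bullet> v \<le> S v" if "k \<in> K" for k v
    unfolding S_def using fin that by (intro Max_ge) auto
  have Sin: "\<exists>k\<in>K. S v = k \<bullet> v" for v
  proof -
    have "Max ((\<lambda>k. k \<bullet> v) ` K) \<in> (\<lambda>k. k \<bullet> v) ` K"
      using fin ne by (intro Max_in) auto
    then show ?thesis unfolding S_def by auto
  qed
  define ks where "ks = (\<lambda>\<sigma>. SOME k. k \<in> K \<and> S \<sigma> = k \<bullet> \<sigma>)"
  have ks: "ks \<sigma> \<in> K \<and> S \<sigma> = ks \<sigma> \<bullet> \<sigma>" for \<sigma>
    unfolding ks_def using someI_ex[OF Sin[of \<sigma>, unfolded Bex_def]] .
  define ind where "ind = (\<lambda>\<sigma> (v::real^'n). \<Prod>j\<in>UNIV. hs (\<sigma> $ j) (v $ j))"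
  define sg where "sg = (\<lambda>v::real^'n. (\<chi> j. if 0 \<le> v $ j then 1 else -1) :: real^'n)"
  have sg_cube: "sg v \<in> cube" for v by (auto simp: sg_def cube_def)
  have ind_eq: "ind \<sigma> v = (if \<sigma> = sg v then 1 else 0)" if "\<sigma> \<in> cube" for \<sigma> v
  proof (cases "\<sigma> = sg v")
    case True
    then show ?thesis by (auto simp: ind_def sg_def hs_def intro!: prod.neutral)
  next
    case False
    then obtain j where j: "\<sigma> $ j \<noteq> sg v $ j" by (auto simp: vec_eq_iff)
    have "hs (\<sigma> $ j) (v $ j) = 0" using j cube_nth[OF that, of j] by (auto simp: sg_def hs_def split: if_splits)
    then have "ind \<sigma> v = 0" unfolding ind_def by (intro prod_zero) auto
    with False show ?thesis by simp
  qed
  define T where "T = (\<lambda>v. \<Sum>\<sigma>\<in>cube. \<Sum>i\<in>UNIV. ks \<sigma> $ i * (ind \<sigma> v * v $ i))"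
  have T_eq: "T v = ks (sg v) \<bullet> v" for v
  proof -
    have "T v = (\<Sum>\<sigma>\<in>cube. ind \<sigma> v * (ks \<sigma> \<bullet> v))"
      unfolding T_def inner_cart by (simp add: sum_distrib_left mult_ac)
    also have "\<dots> = (\<Sum>\<sigma>\<in>cube. (if \<sigma> = sg v then ks \<sigma> \<bullet> v else 0))"
      by (intro sum.cong) (auto simp: ind_eq)
    also have "\<dots> = ks (sg v) \<bullet> v" using sg_cube by simp
    finally show ?thesis .
  qed
  have TS: "T v \<le> S v" for v unfolding T_eq using ks by (intro Sge) auto
  define hh where "hh = (\<lambda>(\<sigma>::real^'n) (i::'n) (j::'n) u. hs (\<sigma> $ j) u * (if j = i then u else 1))"
  have hh_prod: "ind \<sigma> v * v $ i = (\<Prod>j\<in>UNIV. hh \<sigma> i j (v $ j))" for \<sigma> i v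
  proof -
    have "(\<Prod>j\<in>UNIV. hh \<sigma> i j (v $ j)) = ind \<sigma> v * (\<Prod>j\<in>UNIV. (if j = i then v $ j else 1))"
      unfolding hh_def ind_def by (simp add: prod.distrib)
    also have "(\<Prod>j\<in>UNIV. (if j = i then v $ j else 1)) = v $ i"
      by (subst prod.If_cases) auto
    finally show ?thesis by simp
  qed
  have hh_meas: "hh \<sigma> i j \<in> borel_measurable borel" for \<sigma> i j
    unfolding hh_def by measurable
  have hh_int: "integrable lborel (\<lambda>u. std_normal_density u * hh \<sigma> i j u)" for \<sigma> i j
    unfolding hh_def using int_hs[of "\<sigma> $ j"] int_hs_u[of "\<sigma> $ j"] by (cases "j = i") auto
  note gp = gauss_prod[OF hh_meas hh_int]
  have int_piece: "integrable std_gauss (\<lambda>v. ind \<sigma> v * v $ i)" for \<sigma> i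
    unfolding hh_prod by (rule gp(1))
  have val_piece: "(\<integral>v. ind \<sigma> v * v $ i \<partial>std_gauss) = \<sigma> $ i / sqrt (2*pi) * (1/2) ^ (CARD('n) - 1)"
    if "\<sigma> \<in> cube" for \<sigma> i
  proof -
    have "(\<integral>v. ind \<sigma> v * v $ i \<partial>std_gauss) = (\<Prod>j\<in>UNIV. \<integral>u. std_normal_density u * hh \<sigma> i j u \<partial>lborel)"
      unfolding hh_prod by (rule gp(2))
    also have "\<dots> = (\<integral>u. std_normal_density u * hh \<sigma> i i u \<partial>lborel) * (1/2) ^ (CARD('n) - 1)"
    proof (rule prod_special)
      fix j assume "j \<noteq> i"
      then show "(\<integral>u. std_normal_density u * hh \<sigma> i j u \<partial>lborel) = 1/2"
        using hs_int_vals(1)[OF cube_nth[OF that, of j, THEN disjE]] cube_nth[OF that, of j]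
        by (auto simp: hh_def)
    qed
    also have "(\<integral>u. std_normal_density u * hh \<sigma> i i u \<partial>lborel) = \<sigma> $ i / sqrt (2*pi)"
      using cube_nth[OF that, of i] by (auto simp: hh_def hs_int_vals)
    finally show ?thesis .
  qed
  have Tint: "integrable std_gauss T"
    unfolding T_def using int_piece by auto
  have Tval: "(\<integral>v. T v \<partial>std_gauss) = (\<Sum>\<sigma>\<in>cube. S \<sigma>) * ((1/2) ^ (CARD('n) - 1) / sqrt (2*pi))"
  proof -
    have "(\<integral>v. T v \<partial>std_gauss) = (\<Sum>\<sigma>\<in>cube. \<Sum>i\<in>UNIV. ks \<sigma> $ i * (\<integral>v. ind \<sigma> v * v $ i \<partial>std_gauss))"
      unfolding T_def using int_piece by (simp add: Bochner_Integration.integral_sum)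
    also have "\<dots> = (\<Sum>\<sigma>\<in>cube. (ks \<sigma> \<bullet> \<sigma>) * ((1/2) ^ (CARD('n) - 1) / sqrt (2*pi)))"
    proof (intro sum.cong refl)
      fix \<sigma> :: "real^'n" assume \<sigma>: "\<sigma> \<in> cube"
      have "(\<Sum>i\<in>UNIV. ks \<sigma> $ i * (\<integral>v. ind \<sigma> v * v $ i \<partial>std_gauss)) =
         (\<Sum>i\<in>UNIV. (ks \<sigma> $ i * \<sigma> $ i) * ((1/2) ^ (CARD('n) - 1) / sqrt (2*pi)))"
        using val_piece[OF \<sigma>] by (intro sum.cong refl) simp
      also have "\<dots> = (ks \<sigma> \<bullet> \<sigma>) * ((1/2) ^ (CARD('n) - 1) / sqrt (2*pi))"
        unfolding inner_cart by (simp only: sum_distrib_right)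
      finally show "(\<Sum>i\<in>UNIV. ks \<sigma> $ i * (\<integral>v. ind \<sigma> v * v $ i \<partial>std_gauss)) = (ks \<sigma> \<bullet> \<sigma>) * ((1/2) ^ (CARD('n) - 1) / sqrt (2*pi))" .
    qed
    also have "\<dots> = (\<Sum>\<sigma>\<in>cube. S \<sigma>) * ((1/2) ^ (CARD('n) - 1) / sqrt (2*pi))"
      using ks by (simp only: sum_distrib_right)
    finally show ?thesis .
  qed
  have Smeas: "S \<in> borel_measurable std_gauss"
    unfolding S_def std_gauss_def using fin by measurable
  define B where "B = (\<lambda>v::real^'n. \<Sum>i\<in>UNIV. \<Prod>j\<in>UNIV. (if j = i then \<bar>v $ j\<bar> else 1))"
  have Bint: "integrable std_gauss B"
  proof -
    have "integrable std_gauss (\<lambda>v::real^'n. \<Prod>j\<in>UNIV. (\<lambda>j u. if j = i then \<bar>u\<bar> else 1) j (v $ j))" for i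
    proof (rule gauss_prod(1))
      have ab: "(\<lambda>u::real. \<bar>u\<bar>) \<in> borel_measurable borel" by measurable
      show "(\<lambda>u::real. if j = i then \<bar>u\<bar> else 1::real) \<in> borel_measurable borel" for j
      proof (cases "j = i")
        case True
        have e: "(\<lambda>u. if j = i then \<bar>u\<bar> else 1) = (\<lambda>u::real. \<bar>u\<bar>)" using True by simp
        show ?thesis unfolding e by (rule ab)
      next
        case False
        have e: "(\<lambda>u. if j = i then \<bar>u\<bar> else 1) = (\<lambda>u::real. 1::real)" using False by simp
        show ?thesis unfolding e by simp
      qed
      show "integrable lborel (\<lambda>u. std_normal_density u * (if j = i then \<bar>u\<bar> else 1))" for j
        using integrable_std_normal_moment_abs[of 1] by (cases "j = i") auto
    qed
    then show ?thesis unfolding B_def by auto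
  qed
  have B_eq: "B v = (\<Sum>i\<in>UNIV. \<bar>v $ i\<bar>)" for v
    unfolding B_def by (intro sum.cong refl) (subst prod.If_cases, auto)
  have SB: "norm (S v) \<le> B v" for v
  proof -
    obtain k where k: "k \<in> K" "S v = k \<bullet> v" using Sin by blast
    have "\<bar>k \<bullet> v\<bar> \<le> (\<Sum>i\<in>UNIV. \<bar>k $ i * v $ i\<bar>)" unfolding inner_cart by (rule sum_abs)
    also have "\<dots> \<le> (\<Sum>i\<in>UNIV. \<bar>v $ i\<bar>)"
      using bd[OF k(1)] by (intro sum_mono) (auto simp: abs_mult intro: mult_left_le_one_le)
    finally show ?thesis using k B_eq by simp
  qed
  have Sint: "integrable std_gauss S"
  proof (rule Bochner_Integration.integrable_bound[OF Bint Smeas])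
    have "B v \<ge> 0" for v unfolding B_eq by (intro sum_nonneg) auto
    then show "AE x in std_gauss. norm (S x) \<le> norm (B x)" using SB by (intro AE_I2) (metis abs_of_nonneg real_norm_def)
  qed
  have "(\<integral>v. T v \<partial>std_gauss) \<le> (\<integral>v. S v \<partial>std_gauss)"
    by (rule integral_mono[OF Tint Sint TS])
  moreover have "(1/2::real) ^ (CARD('n) - 1) / sqrt (2*pi) = sqrt (2/pi) / 2 ^ CARD('n)"
  proof -
    have c: "CARD('n) = Suc (CARD('n) - 1)" by simp
    have p: "(2::real) ^ CARD('n) = 2 * 2 ^ (CARD('n) - 1)"
      by (metis c power_Suc)
    have "sqrt (2/pi) / 2 ^ CARD('n) = (sqrt (2/pi) / 2) / 2 ^ (CARD('n) - 1)"
      unfolding p by simp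
    also have "sqrt (2/pi) / 2 = 1 / sqrt (2*pi)"
      by (simp add: real_sqrt_divide field_simps real_sqrt_mult)
    finally show ?thesis by (simp add: power_one_over)
  qed
  ultimately show ?thesis unfolding GWS Tval S_def by (metis (no_types, lifting) mult.commute times_divide_eq_right)
qed



lemma gvec_flipc[simp]: "gvec \<rho> (flipc i y) $ i = gvec \<rho> y $ i"
  by (simp add: gvec_def)

lemma gvec_bound:
  assumes "\<And>z. \<rho> z \<ge> 0"
  shows "\<bar>gvec \<rho> y $ i\<bar> \<le> 1"
proof -
  define a where "a = \<rho> (upd_coord y i 1)"
  define b where "b = \<rho> (upd_coord y i (-1))"
  have ab: "a \<ge> 0" "b \<ge> 0" using assms by (auto simp: a_def b_def)
  have "gvec \<rho> y $ i = (if a = 0 \<and> b = 0 then 0 else (a - b) / (a + b))"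
    by (simp add: gvec_def a_def b_def Let_def)
  moreover have "\<bar>(a - b) / (a + b)\<bar> \<le> 1" if "\<not> (a = 0 \<and> b = 0)"
  proof -
    have "a + b > 0" using ab that by auto
    then show ?thesis using ab by (simp add: abs_le_iff divide_le_eq_1 le_divide_eq)
  qed
  ultimately show ?thesis by auto
qed

lemma tower:
  assumes nn: "\<And>z. \<rho> z \<ge> 0"
    and hf: "\<And>y. y \<in> cube \<Longrightarrow> h (flipc i y) = h y"
  shows "(\<Sum>y\<in>cube. \<rho> y * h y * y $ i) = (\<Sum>y\<in>cube. \<rho> y * h y * (gvec \<rho> y $ i))"
proof -
  define F where "F = (\<lambda>y. \<rho> y * h y * (y $ i - gvec \<rho> y $ i))"
  have pw: "F y + F (flipc i y) = 0" if y: "y \<in> cube" for y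
  proof -
    define a where "a = \<rho> (upd_coord y i 1)"
    define b where "b = \<rho> (upd_coord y i (-1))"
    define g where "g = gvec \<rho> y $ i"
    have g: "g = (if a = 0 \<and> b = 0 then 0 else (a - b) / (a + b))"
      by (simp add: gvec_def a_def b_def g_def Let_def)
    have ab: "a \<ge> 0" "b \<ge> 0" using nn by (auto simp: a_def b_def)
    have key: "a * (1 - g) + b * (-1 - g) = 0"
    proof (cases "a = 0 \<and> b = 0")
      case True then show ?thesis by simp
    next
      case False
      then have "a + b > 0" using ab by auto
      then have q: "(a - b) / (a + b) * (a + b) = a - b" by simp
      have "a * (1 - g) + b * (-1 - g) = (a - b) - g * (a + b)" by (simp add: algebra_simps)
      then show ?thesis using False q unfolding g by simp
    qed
    have fl: "flipc i y = upd_coord y i (- (y $ i))" by (simp add: flipc_def)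
    show ?thesis
    proof (cases "y $ i = 1")
      case True
      have "\<rho> y = a" unfolding a_def using True upd_coord_same[of y i 1] by simp
      moreover have "\<rho> (flipc i y) = b" unfolding b_def fl using True by simp
      ultimately have "F y + F (flipc i y) = h y * (a * (1 - g) + b * (-1 - g))"
        using True hf[OF y] unfolding F_def g_def by (simp add: algebra_simps)
      then show ?thesis using key by simp
    next
      case False
      then have m: "y $ i = -1" using cube_nth[OF y, of i] by auto
      have "\<rho> y = b" unfolding b_def using m upd_coord_same[of y i "-1"] by simp
      moreover have "\<rho> (flipc i y) = a" unfolding a_def fl using m by simp
      ultimately have "F y + F (flipc i y) = h y * (a * (1 - g) + b * (-1 - g))"
        using m hf[OF y] unfolding F_def g_def by (simp add: algebra_simps)
      then show ?thesis using key by simp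
    qed
  qed
  have "2 * (\<Sum>y\<in>cube. F y) = (\<Sum>y\<in>cube. F y) + (\<Sum>y\<in>cube. F (flipc i y))"
    using sum_cube_flip[of F i] by simp
  also have "\<dots> = (\<Sum>y\<in>cube. F y + F (flipc i y))" by (simp add: sum.distrib)
  also have "\<dots> = 0" using pw by simp
  finally have "(\<Sum>y\<in>cube. F y) = 0" by simp
  then show ?thesis unfolding F_def by (simp add: algebra_simps sum_subtractf)
qed

lemma double_sum_cov:
  fixes \<rho> f h :: "real^'n \<Rightarrow> real"
  assumes "(\<Sum>y\<in>cube. \<rho> y) = 1"
  shows "(\<Sum>y\<in>cube. \<Sum>z\<in>cube. \<rho> y * \<rho> z * ((f y - f z) * (h y - h z)))
     = 2 * ((\<Sum>y\<in>cube. \<rho> y * f y * h y) - (\<Sum>y\<in>cube. \<rho> y * f y) * (\<Sum>y\<in>cube. \<rho> y * h y))"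
proof -
  define A where "A = (\<Sum>y\<in>cube. \<rho> y * f y * h y)"
  define P where "P = (\<Sum>y\<in>cube. \<rho> y * f y)"
  define Q where "Q = (\<Sum>y\<in>cube. \<rho> y * h y)"
  have e: "\<rho> y * \<rho> z * ((f y - f z) * (h y - h z)) =
      (\<rho> z * (\<rho> y * f y * h y) + \<rho> y * (\<rho> z * f z * h z)) - ((\<rho> y * f y) * (\<rho> z * h z) + (\<rho> z * f z) * (\<rho> y * h y))" for y z
    by (simp add: algebra_simps)
  have s1: "(\<Sum>y\<in>cube. \<Sum>z\<in>cube. \<rho> z * (\<rho> y * f y * h y)) = A"
    using assms by (simp add: A_def sum_distrib_right[symmetric])
  have s2: "(\<Sum>y\<in>cube. \<Sum>z\<in>cube. \<rho> y * (\<rho> z * f z * h z)) = A"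
    using assms by (simp add: A_def sum_distrib_left[symmetric] sum_distrib_right[symmetric])
  have s3: "(\<Sum>y\<in>cube. \<Sum>z\<in>cube. (\<rho> y * f y) * (\<rho> z * h z)) = P * Q"
    by (simp add: P_def Q_def sum_product)
  have s4: "(\<Sum>y\<in>cube. \<Sum>z\<in>cube. (\<rho> z * f z) * (\<rho> y * h y)) = P * Q"
    by (subst sum.swap) (simp add: P_def Q_def sum_product mult.commute)
  show ?thesis
    unfolding e sum_subtractf sum.distrib s1 s2 s3 s4 A_def[symmetric] P_def[symmetric] Q_def[symmetric]
    by simp
qed

definition mob :: "real \<Rightarrow> real \<Rightarrow> real" where
  "mob A u = (u * (A + 1) + (A - 1)) / ((A + 1) + u * (A - 1))"

lemma mob_den:
  fixes A u :: real
  assumes "A > 0" "\<bar>u\<bar> \<le> 1"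
  shows "(A + 1) + u * (A - 1) \<ge> 2 * min 1 A"
proof (cases "A \<ge> 1")
  case True
  have "(-1) * (A - 1) \<le> u * (A - 1)" using assms True by (intro mult_right_mono) auto
  then show ?thesis using True by simp
next
  case False
  have "(-1) * (1 - A) \<le> (-u) * (1 - A)" using assms False by (intro mult_right_mono) auto
  then show ?thesis using False by (simp add: algebra_simps)
qed

lemma mob_ineq:
  fixes A u v :: real
  assumes A: "A > 0" and u: "\<bar>u\<bar> \<le> 1" and v: "\<bar>v\<bar> \<le> 1"
  shows "(mob A u - mob A v) * (mob A u - mob A v) \<le> max A (1/A) * ((u - v) * (mob A u - mob A v))"
proof -
  define m where "m = min 1 A"
  have m: "m > 0" using A by (simp add: m_def)
  define Du where "Du = (A + 1) + u * (A - 1)"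
  define Dv where "Dv = (A + 1) + v * (A - 1)"
  have Du: "Du \<ge> 2 * m" using mob_den[OF A u] by (simp add: Du_def m_def)
  have Dv: "Dv \<ge> 2 * m" using mob_den[OF A v] by (simp add: Dv_def m_def)
  have Dup: "Du > 0" "Dv > 0" using Du Dv m by auto
  define r where "r = 4 * A / (Du * Dv)"
  define Nu where "Nu = u * (A + 1) + (A - 1)"
  define Nv where "Nv = v * (A + 1) + (A - 1)"
  have nd: "Nu * Dv - Nv * Du = 4 * A * (u - v)"
    unfolding Nu_def Nv_def Du_def Dv_def by (simp add: algebra_simps)
  have diff: "mob A u - mob A v = r * (u - v)"
  proof -
    have "mob A u - mob A v = Nu / Du - Nv / Dv"
      by (simp add: mob_def Nu_def Nv_def Du_def Dv_def)
    also have "\<dots> = (Nu * Dv - Nv * Du) / (Du * Dv)"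
      using Dup by (simp add: diff_frac_eq)
    also have "\<dots> = r * (u - v)" unfolding nd r_def by simp
    finally show ?thesis .
  qed
  have rpos: "r \<ge> 0" using Dup A by (simp add: r_def)
  have DD: "Du * Dv \<ge> (2 * m) * (2 * m)" using Du Dv m by (intro mult_mono) auto
  have "r \<le> 4 * A / ((2 * m) * (2 * m))"
    unfolding r_def using DD m A Dup by (intro divide_left_mono) (auto intro!: mult_pos_pos)
  also have "\<dots> = A / (m * m)" by simp
  also have "\<dots> \<le> max A (1/A)"
  proof (cases "A \<ge> 1")
    case True then show ?thesis by (simp add: m_def)
  next
    case False then have "m = A" by (simp add: m_def)
    then show ?thesis using A by simp
  qed
  finally have rM: "r \<le> max A (1/A)" .
  have "(mob A u - mob A v) * (mob A u - mob A v) = r * (r * ((u - v) * (u - v)))"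
    unfolding diff by (simp add: algebra_simps)
  also have "\<dots> \<le> max A (1/A) * (r * ((u - v) * (u - v)))"
    using rM rpos by (intro mult_right_mono) auto
  also have "\<dots> = max A (1/A) * ((u - v) * (mob A u - mob A v))"
    unfolding diff by (simp add: algebra_simps)
  finally show ?thesis .
qed

lemma inner_upd: "(\<theta>::real^'n) \<bullet> upd_coord y i s = \<theta> \<bullet> y + \<theta> $ i * (s - y $ i)"
proof -
  have "\<theta> \<bullet> upd_coord y i s = (\<Sum>j\<in>UNIV. \<theta> $ j * y $ j + (if j = i then \<theta> $ i * (s - y $ i) else 0))"
    unfolding inner_vec_def by (intro sum.cong) (auto simp: algebra_simps)
  also have "\<dots> = \<theta> \<bullet> y + \<theta> $ i * (s - y $ i)"
    by (simp add: sum.distrib inner_vec_def)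
  finally show ?thesis .
qed

lemma tilt_gvec:
  assumes nn: "\<And>z. p z \<ge> 0" and y: "y \<in> cube"
    and Z: "(\<Sum>z\<in>cube. p z * exp (\<theta> \<bullet> z)) > 0"
    and nz: "\<not> (p (upd_coord y i 1) = 0 \<and> p (upd_coord y i (-1)) = 0)"
  shows "gvec (tilt \<theta> p) y $ i = mob (exp (2 * \<theta> $ i)) (gvec p y $ i)"
proof -
  define Zs where "Zs = (\<Sum>z\<in>cube. p z * exp (\<theta> \<bullet> z))"
  define a where "a = p (upd_coord y i 1)"
  define b where "b = p (upd_coord y i (-1))"
  define E where "E = exp (\<theta> \<bullet> upd_coord y i (-1))"
  define A where "A = exp (2 * \<theta> $ i)"
  have ab0: "a \<ge> 0" "b \<ge> 0" using nn by (auto simp: a_def b_def)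
  have ab: "a \<ge> 0" "b \<ge> 0" "a + b > 0" using ab0 nz unfolding a_def[symmetric] b_def[symmetric] by auto
  have EA: "E > 0" "A > 0" "Zs > 0" using Z by (auto simp: E_def A_def Zs_def)
  have c1: "upd_coord y i 1 \<in> cube" "upd_coord y i (-1) \<in> cube" using y by (auto intro: upd_coord_cube)
  have ip: "exp (\<theta> \<bullet> upd_coord y i 1) = E * A"
  proof -
    have "\<theta> \<bullet> upd_coord y i 1 = \<theta> \<bullet> upd_coord y i (-1) + 2 * \<theta> $ i"
      by (simp add: inner_upd algebra_simps)
    then show ?thesis by (simp add: E_def A_def exp_add)
  qed
  have t1: "tilt \<theta> p (upd_coord y i 1) = a * (E * A) / Zs"
    using c1 ip by (simp add: tilt_def a_def Zs_def)
  have t2: "tilt \<theta> p (upd_coord y i (-1)) = b * E / Zs"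
    using c1 by (simp add: tilt_def b_def Zs_def E_def)
  have aAb: "a * A + b > 0"
  proof (cases "a > 0")
    case True then show ?thesis using ab EA by (simp add: add_pos_nonneg)
  next
    case False then have "a = 0" using ab by simp
    then show ?thesis using ab by simp
  qed
  have lhs: "gvec (tilt \<theta> p) y $ i = (a * A - b) / (a * A + b)"
  proof -
    have nz2: "\<not> (a * (E * A) / Zs = 0 \<and> b * E / Zs = 0)"
      using ab EA by auto
    have g0: "gvec \<rho> y $ i = (if \<rho> (upd_coord y i 1) = 0 \<and> \<rho> (upd_coord y i (-1)) = 0 then 0
       else (\<rho> (upd_coord y i 1) - \<rho> (upd_coord y i (-1))) / (\<rho> (upd_coord y i 1) + \<rho> (upd_coord y i (-1))))" for \<rho>
      by (simp add: gvec_def Let_def)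
    have "gvec (tilt \<theta> p) y $ i = (a * (E * A) / Zs - b * E / Zs) / (a * (E * A) / Zs + b * E / Zs)"
      unfolding g0 t1 t2 by (rule if_not_P[OF nz2])
    also have "\<dots> = ((E / Zs) * (a * A) - (E / Zs) * b) / ((E / Zs) * (a * A) + (E / Zs) * b)"
      by (simp add: mult_ac)
    also have "\<dots> = (a * A - b) / (a * A + b)"
      unfolding right_diff_distrib[symmetric] distrib_left[symmetric]
      using EA by (intro mult_divide_mult_cancel_left) auto
    finally show ?thesis .
  qed
  have rhs: "gvec p y $ i = (a - b) / (a + b)"
    using ab nz by (simp add: gvec_def Let_def a_def b_def)
  define q where "q = (a - b) / (a + b)"
  have hN: "q * (A + 1) + (A - 1) = 2 * (a * A - b) / (a + b)"
    using ab unfolding q_def by (simp add: field_simps)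
  have hD: "(A + 1) + q * (A - 1) = 2 * (a * A + b) / (a + b)"
    using ab unfolding q_def by (simp add: field_simps)
  show ?thesis
    unfolding lhs rhs A_def[symmetric] mob_def q_def[symmetric] hN hD
  proof -
    have gen: "(x / s) / (z / s) = x / z" if "s \<noteq> 0" for x z s :: real
      using that by (simp add: divide_divide_eq_left)
    have "(2 * (a * A - b) / (a + b)) / (2 * (a * A + b) / (a + b)) = (2 * (a * A - b)) / (2 * (a * A + b))"
      using ab by (intro gen) auto
    also have "\<dots> = (a * A - b) / (a * A + b)" by (rule mult_divide_mult_cancel_left) simp
    finally show "(a * A - b) / (a * A + b) = (2 * (a * A - b) / (a + b)) / (2 * (a * A + b) / (a + b))" by simp
  qed
qed

lemma tilt_nonneg: "(\<And>z. p z \<ge> 0) \<Longrightarrow> (\<Sum>z\<in>cube. p z * exp (\<theta> \<bullet> z)) > 0 \<Longrightarrow> tilt \<theta> p y \<ge> 0"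
  by (simp add: tilt_def)

lemma tilt_sum: "(\<Sum>z\<in>cube. p z * exp (\<theta> \<bullet> z)) > 0 \<Longrightarrow> (\<Sum>y\<in>cube. tilt \<theta> p y) = 1"
  by (simp add: tilt_def sum_divide_distrib[symmetric])

lemma H_diag:
  assumes nn: "\<And>z. p z \<ge> 0" and Z: "(\<Sum>z\<in>cube. p z * exp (\<theta> \<bullet> z)) > 0"
  shows "0 \<le> Hcov (tilt \<theta> p) $ i $ i"
    "Hcov (tilt \<theta> p) $ i $ i \<le> max (exp (2 * \<theta> $ i)) (1 / exp (2 * \<theta> $ i)) *
        ((\<Sum>y\<in>cube. tilt \<theta> p y * (gvec p y $ i) * y $ i)
          - (\<Sum>y\<in>cube. tilt \<theta> p y * (gvec p y $ i)) * (\<Sum>y\<in>cube. tilt \<theta> p y * y $ i))"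
proof -
  define \<rho> where "\<rho> = tilt \<theta> p"
  define u where "u = (\<lambda>y. gvec p y $ i)"
  define \<phi> where "\<phi> = (\<lambda>y. gvec \<rho> y $ i)"
  define A where "A = exp (2 * \<theta> $ i)"
  define M where "M = max A (1 / A)"
  have \<rho>nn: "\<rho> z \<ge> 0" for z unfolding \<rho>_def by (rule tilt_nonneg[OF nn Z])
  have \<rho>1: "(\<Sum>y\<in>cube. \<rho> y) = 1" unfolding \<rho>_def by (rule tilt_sum[OF Z])
  have Apos: "A > 0" by (simp add: A_def)
  have H: "Hcov \<rho> $ i $ i = (\<Sum>y\<in>cube. \<rho> y * \<phi> y * \<phi> y) - (\<Sum>y\<in>cube. \<rho> y * \<phi> y) * (\<Sum>y\<in>cube. \<rho> y * \<phi> y)"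
    by (simp add: Hcov_def \<phi>_def)
  have VV: "(\<Sum>y\<in>cube. \<Sum>z\<in>cube. \<rho> y * \<rho> z * ((\<phi> y - \<phi> z) * (\<phi> y - \<phi> z))) = 2 * Hcov \<rho> $ i $ i"
    unfolding H by (rule double_sum_cov[OF \<rho>1])
  have t1: "(\<Sum>y\<in>cube. \<rho> y * u y * y $ i) = (\<Sum>y\<in>cube. \<rho> y * u y * \<phi> y)"
    unfolding \<phi>_def u_def by (rule tower[OF \<rho>nn]) simp
  have t2: "(\<Sum>y\<in>cube. \<rho> y * y $ i) = (\<Sum>y\<in>cube. \<rho> y * \<phi> y)"
    using tower[OF \<rho>nn, of "\<lambda>_. 1" i] unfolding \<phi>_def by simp
  have CC: "(\<Sum>y\<in>cube. \<Sum>z\<in>cube. \<rho> y * \<rho> z * ((u y - u z) * (\<phi> y - \<phi> z))) =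
      2 * ((\<Sum>y\<in>cube. \<rho> y * u y * y $ i) - (\<Sum>y\<in>cube. \<rho> y * u y) * (\<Sum>y\<in>cube. \<rho> y * y $ i))"
    unfolding t1 t2 by (rule double_sum_cov[OF \<rho>1])
  have mobeq: "\<phi> y = mob A (u y)" if "\<rho> y \<noteq> 0" for y
  proof -
    have y: "y \<in> cube" using that by (auto simp: \<rho>_def tilt_def split: if_splits)
    have "p y \<noteq> 0" using that by (auto simp: \<rho>_def tilt_def split: if_splits)
    moreover have "y = upd_coord y i (y $ i)" by (simp add: upd_coord_same)
    ultimately have nz: "\<not> (p (upd_coord y i 1) = 0 \<and> p (upd_coord y i (-1)) = 0)"
      using cube_nth[OF y, of i] by auto
    show ?thesis unfolding \<phi>_def u_def A_def \<rho>_def by (rule tilt_gvec[OF nn y Z nz])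
  qed
  have ub: "\<bar>u y\<bar> \<le> 1" for y unfolding u_def by (rule gvec_bound[OF nn])
  have pw: "\<rho> y * \<rho> z * ((\<phi> y - \<phi> z) * (\<phi> y - \<phi> z)) \<le> M * (\<rho> y * \<rho> z * ((u y - u z) * (\<phi> y - \<phi> z)))" for y z
  proof (cases "\<rho> y = 0 \<or> \<rho> z = 0")
    case True then show ?thesis by auto
  next
    case False
    then have "(\<phi> y - \<phi> z) * (\<phi> y - \<phi> z) \<le> M * ((u y - u z) * (\<phi> y - \<phi> z))"
      using mob_ineq[OF Apos ub ub] mobeq unfolding M_def by auto
    moreover have "\<rho> y * \<rho> z \<ge> 0" using \<rho>nn by simp
    ultimately show ?thesis
      by (metis mult.left_commute mult_left_mono)
  qed
  have "2 * Hcov \<rho> $ i $ i \<le> (\<Sum>y\<in>cube. \<Sum>z\<in>cube. M * (\<rho> y * \<rho> z * ((u y - u z) * (\<phi> y - \<phi> z))))"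
    unfolding VV[symmetric] by (intro sum_mono pw)
  also have "\<dots> = M * (2 * ((\<Sum>y\<in>cube. \<rho> y * u y * y $ i) - (\<Sum>y\<in>cube. \<rho> y * u y) * (\<Sum>y\<in>cube. \<rho> y * y $ i)))"
    unfolding CC[symmetric] by (simp add: sum_distrib_left)
  also have "\<dots> = 2 * (M * ((\<Sum>y\<in>cube. \<rho> y * u y * y $ i) - (\<Sum>y\<in>cube. \<rho> y * u y) * (\<Sum>y\<in>cube. \<rho> y * y $ i)))"
    by simp
  finally have fin: "Hcov \<rho> $ i $ i \<le> M * ((\<Sum>y\<in>cube. \<rho> y * u y * y $ i) - (\<Sum>y\<in>cube. \<rho> y * u y) * (\<Sum>y\<in>cube. \<rho> y * y $ i))"
    by linarith
  show "Hcov (tilt \<theta> p) $ i $ i \<le> max (exp (2 * \<theta> $ i)) (1 / exp (2 * \<theta> $ i)) *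
        ((\<Sum>y\<in>cube. tilt \<theta> p y * (gvec p y $ i) * y $ i)
          - (\<Sum>y\<in>cube. tilt \<theta> p y * (gvec p y $ i)) * (\<Sum>y\<in>cube. tilt \<theta> p y * y $ i))"
    using fin unfolding M_def A_def \<rho>_def u_def by simp
  have "0 \<le> (\<Sum>y\<in>cube. \<Sum>z\<in>cube. \<rho> y * \<rho> z * ((\<phi> y - \<phi> z) * (\<phi> y - \<phi> z)))"
    using \<rho>nn by (intro sum_nonneg) auto
  then have "0 \<le> 2 * Hcov \<rho> $ i $ i" unfolding VV .
  then show "0 \<le> Hcov (tilt \<theta> p) $ i $ i" unfolding \<rho>_def by simp
qed



definition cc :: "real \<Rightarrow> real" where "cc t = exp t + exp (- t)"
definition dl :: "real \<Rightarrow> real" where "dl t = (exp t - exp (- t)) / cc t"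
definition kf :: "real \<Rightarrow> real \<Rightarrow> real" where
  "kf t u = (if u = 1 then (1 + dl t) / 2 else (1 - dl t) / 2)"
definition jf :: "real \<Rightarrow> real \<Rightarrow> real \<Rightarrow> real" where
  "jf t s u = (if u = 1 then (if s = 1 then 1/2 else dl t / 2) else (if s = 1 then 0 else (1 - dl t) / 2))"

lemma cc_pos: "cc t > 0" by (simp add: cc_def add_pos_pos)

lemma dl_bounds: assumes "t > 0" shows "0 < dl t" "dl t < 1"
proof -
  have "exp (-t) < exp t" using assms by simp
  then show "0 < dl t" using cc_pos[of t] by (simp add: dl_def)
  have "exp t - exp (-t) < exp t + exp (-t)" by simp
  then show "dl t < 1" using cc_pos[of t] by (simp add: dl_def cc_def)
qed

lemma kf_exp: "u = 1 \<or> u = -1 \<Longrightarrow> kf t u = exp (t * u) / cc t"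
proof -
  have c: "cc t \<noteq> 0" using cc_pos[of t] by simp
  assume "u = 1 \<or> u = -1"
  then show ?thesis
  proof
    assume u: "u = 1"
    have "(1 + dl t) / 2 = exp t / cc t"
      using c unfolding dl_def by (simp add: field_simps) (simp add: cc_def distrib_left[symmetric])
    then show ?thesis using u by (simp add: kf_def)
  next
    assume u: "u = -1"
    have "(1 - dl t) / 2 = exp (-t) / cc t"
      using c unfolding dl_def cc_def by (simp add: field_simps)
    then show ?thesis using u by (simp add: kf_def)
  qed
qed

lemma exp_inner_prod: "exp (t * ((x::real^'n) \<bullet> y)) = (\<Prod>i\<in>UNIV. exp (t * (x $ i * y $ i)))"
  by (simp add: inner_cart sum_distrib_left exp_sum)

definition kap :: "real \<Rightarrow> real^'n \<Rightarrow> real^'n \<Rightarrow> real" where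
  "kap t x y = (\<Prod>i\<in>UNIV. exp (t * (x $ i * y $ i)) / cc t)"

lemma kap_prod:
  fixes x y :: "real^'n::finite"
  shows "x \<in> cube \<Longrightarrow> y \<in> cube \<Longrightarrow> kap t x y = (\<Prod>i\<in>UNIV. kf t (x $ i * y $ i))"
proof -
  assume x: "x \<in> cube" and y: "y \<in> cube"
  have "(\<Prod>i\<in>UNIV. kf t (x $ i * y $ i)) = (\<Prod>i\<in>UNIV. exp (t * (x $ i * y $ i)) / cc t)"
    using cube_nth[OF x] cube_nth[OF y] by (intro prod.cong refl kf_exp) (metis mult_minus_left mult_1 mult_minus_right mult_1_right minus_minus)
  then show ?thesis by (simp add: kap_def)
qed

lemma kap_alt: "kap t (x::real^'n::finite) y = exp (t * (x \<bullet> y)) / cc t ^ CARD('n)"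
  by (simp add: kap_def prod_dividef exp_inner_prod)

lemma kap_nonneg: "kap t x y \<ge> 0" unfolding kap_def by (intro prod_nonneg divide_nonneg_pos) (simp_all add: cc_pos)

lemma exp_pm: "y \<in> cube \<Longrightarrow> exp (t * y $ i) + exp (- (t * y $ i)) = cc t"
  using cube_nth[of y i] by (auto simp: cc_def)

lemma exp_mm: "y \<in> cube \<Longrightarrow> exp (t * y $ i) - exp (- (t * y $ i)) = y $ i * (exp t - exp (- t))"
  using cube_nth[of y i] by auto

lemma kap_sum: fixes y :: "real^'n::finite" assumes y: "y \<in> cube" shows "(\<Sum>x\<in>cube. kap t x y) = 1"
proof -
  have "(\<Sum>x\<in>cube. exp (t * (x \<bullet> y))) = (\<Sum>x\<in>cube. \<Prod>i\<in>UNIV. (\<lambda>i s. exp (t * (s * y $ i))) i (x $ i))"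
    by (simp add: exp_inner_prod)
  also have "\<dots> = (\<Prod>i\<in>UNIV. exp (t * y $ i) + exp (- (t * y $ i)))"
    by (subst cube_prod_sum) simp
  also have "\<dots> = (\<Prod>i\<in>(UNIV::'n set). cc t)"
    using exp_pm[OF y] by simp
  finally show ?thesis using cc_pos[of t] by (simp add: kap_alt sum_divide_distrib[symmetric])
qed

lemma prod_swap_one:
  fixes f :: "'n::finite \<Rightarrow> real"
  shows "(\<Prod>i\<in>UNIV. if i = k then a else f i) * f k = a * (\<Prod>i\<in>UNIV. f i)"
proof -
  have "(\<Prod>i\<in>UNIV. if i = k then a else f i) = a * (\<Prod>i\<in>UNIV - {k}. f i)"
    by (subst prod.remove[of _ k]) (auto intro!: prod.cong)
  moreover have "(\<Prod>i\<in>UNIV. f i) = f k * (\<Prod>i\<in>UNIV - {k}. f i)"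
    by (subst prod.remove[of _ k]) auto
  ultimately show ?thesis by simp
qed

lemma prod_if_one: fixes j :: "'n::finite" shows "(\<Prod>i\<in>UNIV. (if i = j then (s::real) else 1)) = s"
  by (subst prod.If_cases) auto

lemma kap_mean: fixes y :: "real^'n::finite" assumes y: "y \<in> cube" shows "(\<Sum>x\<in>cube. kap t x y * x $ j) = dl t * y $ j"
proof -
  define h where "h = (\<lambda>i s. (if i = j then s else 1) * exp (t * (s * y $ i)))"
  have "(\<Sum>x\<in>cube. exp (t * (x \<bullet> y)) * x $ j) = (\<Sum>x\<in>cube. \<Prod>i\<in>UNIV. h i (x $ i))"
    by (simp add: exp_inner_prod h_def prod.distrib prod_if_one mult.commute)
  also have "\<dots> = (\<Prod>i\<in>UNIV. h i 1 + h i (-1))" by (rule cube_prod_sum)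
  also have "\<dots> * cc t = (y $ j * (exp t - exp (-t))) * (\<Prod>i\<in>(UNIV::'n set). cc t)"
  proof -
    have "(\<Prod>i\<in>UNIV. h i 1 + h i (-1)) = (\<Prod>i\<in>UNIV. if i = j then y $ j * (exp t - exp (-t)) else cc t)"
      using exp_pm[OF y] exp_mm[OF y] by (intro prod.cong refl) (auto simp: h_def)
    then show ?thesis using prod_swap_one[of j "y $ j * (exp t - exp (-t))" "\<lambda>_. cc t"] by simp
  qed
  finally have e: "(\<Sum>x\<in>cube. exp (t * (x \<bullet> y)) * x $ j) * cc t = y $ j * (exp t - exp (-t)) * cc t ^ CARD('n)"
    by simp
  have "(\<Sum>x\<in>cube. kap t x y * x $ j) = (\<Sum>x\<in>cube. exp (t * (x \<bullet> y)) * x $ j) / cc t ^ CARD('n)"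
    by (simp add: kap_alt sum_divide_distrib)
  also have "\<dots> = y $ j * (exp t - exp (-t)) / cc t"
    using e cc_pos[of t] by (simp add: field_simps)
  finally show ?thesis by (simp add: dl_def)
qed

definition JJ :: "real \<Rightarrow> real^'n \<Rightarrow> real^'n \<Rightarrow> real^'n \<Rightarrow> real" where
  "JJ t y x \<sigma> = (\<Prod>i\<in>UNIV. jf t (\<sigma> $ i * y $ i) (x $ i * y $ i))"

lemma pm_cases: "y \<in> cube \<Longrightarrow> x \<in> cube \<Longrightarrow> x $ i * y $ i = 1 \<or> x $ i * y $ i = -1"
  using cube_nth[of y i] cube_nth[of x i] by auto

lemma jf_nonneg: "t > 0 \<Longrightarrow> jf t s u \<ge> 0"
  using dl_bounds[of t] by (simp add: jf_def)

lemma JJ_nonneg: "t > 0 \<Longrightarrow> JJ t y x \<sigma> \<ge> 0"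
  unfolding JJ_def by (intro prod_nonneg jf_nonneg) auto

lemma prod_replace:
  fixes f :: "'n::finite \<Rightarrow> real"
  shows "(\<Prod>i\<in>UNIV. if i = k then f k * b else f i) = b * (\<Prod>i\<in>UNIV. f i)"
proof -
  have "(\<Prod>i\<in>UNIV. if i = k then f k * b else f i) = (f k * b) * (\<Prod>i\<in>UNIV - {k}. f i)"
    by (subst prod.remove[of _ k]) (auto intro!: prod.cong)
  moreover have "(\<Prod>i\<in>UNIV. f i) = f k * (\<Prod>i\<in>UNIV - {k}. f i)"
    by (subst prod.remove[of _ k]) auto
  ultimately show ?thesis by simp
qed

lemma JJ_sum_sigma:
  fixes x y :: "real^'n::finite"
  assumes x: "x \<in> cube" and y: "y \<in> cube"
  shows "(\<Sum>\<sigma>\<in>cube. JJ t y x \<sigma>) = kap t x y"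
proof -
  have "(\<Sum>\<sigma>\<in>cube. JJ t y x \<sigma>) = (\<Sum>\<sigma>\<in>cube. \<Prod>i\<in>UNIV. (\<lambda>i s. jf t (s * y $ i) (x $ i * y $ i)) i (\<sigma> $ i))"
    by (simp add: JJ_def)
  also have "\<dots> = (\<Prod>i\<in>UNIV. jf t (y $ i) (x $ i * y $ i) + jf t (- y $ i) (x $ i * y $ i))"
    by (subst cube_prod_sum) simp
  also have "\<dots> = (\<Prod>i\<in>UNIV. kf t (x $ i * y $ i))"
    using cube_nth[OF y] pm_cases[OF y x]
    by (intro prod.cong refl) (auto simp: jf_def kf_def)
  finally show ?thesis using kap_prod[OF x y] by simp
qed

lemma JJ_sum_x:
  fixes \<sigma> y :: "real^'n::finite"
  assumes s: "\<sigma> \<in> cube" and y: "y \<in> cube"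
  shows "(\<Sum>x\<in>cube. JJ t y x \<sigma>) = (1/2) ^ CARD('n)"
proof -
  have "(\<Sum>x\<in>cube. JJ t y x \<sigma>) = (\<Sum>x\<in>cube. \<Prod>i\<in>UNIV. (\<lambda>i s. jf t (\<sigma> $ i * y $ i) (s * y $ i)) i (x $ i))"
    by (simp add: JJ_def)
  also have "\<dots> = (\<Prod>i\<in>UNIV. jf t (\<sigma> $ i * y $ i) (y $ i) + jf t (\<sigma> $ i * y $ i) (- y $ i))"
    by (subst cube_prod_sum) simp
  also have "\<dots> = (\<Prod>i\<in>(UNIV::'n set). 1/2)"
    using cube_nth[OF y] pm_cases[OF y s]
    by (intro prod.cong refl) (auto simp: jf_def field_simps)
  finally show ?thesis by simp
qed

lemma JJ_mean:
  fixes x y :: "real^'n::finite"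
  assumes x: "x \<in> cube" and y: "y \<in> cube" and t: "t > 0"
  shows "(\<Sum>\<sigma>\<in>cube. JJ t y x \<sigma> * \<sigma> $ k) * (1 + dl t) = kap t x y * (x $ k - dl t * y $ k)"
proof -
  define u where "u = x $ k * y $ k"
  have "(\<Sum>\<sigma>\<in>cube. JJ t y x \<sigma> * \<sigma> $ k) = (\<Sum>\<sigma>\<in>cube. \<Prod>i\<in>UNIV. (\<lambda>i s. (if i = k then s else 1) * jf t (s * y $ i) (x $ i * y $ i)) i (\<sigma> $ i))"
    by (simp add: JJ_def prod.distrib prod_if_one mult.commute)
  also have "\<dots> = (\<Prod>i\<in>UNIV. (if i = k then 1 else 1) * jf t (y $ i) (x $ i * y $ i) + (if i = k then -1 else 1) * jf t (- y $ i) (x $ i * y $ i))"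
    by (subst cube_prod_sum) simp
  also have "\<dots> = (\<Prod>i\<in>UNIV. if i = k then kf t (x $ k * y $ k) * (y $ k * (u - dl t) / (1 + dl t)) else kf t (x $ i * y $ i))"
  proof (intro prod.cong refl)
    fix i
    show "(if i = k then 1 else 1) * jf t (y $ i) (x $ i * y $ i) + (if i = k then -1 else 1) * jf t (- y $ i) (x $ i * y $ i)
        = (if i = k then kf t (x $ k * y $ k) * (y $ k * (u - dl t) / (1 + dl t)) else kf t (x $ i * y $ i))"
    proof (cases "i = k")
      case False
      then show ?thesis using cube_nth[OF y, of i] pm_cases[OF y x, of i]
        by (auto simp: jf_def kf_def)
    next
      case True
      have d: "1 + dl t \<noteq> 0" using dl_bounds[OF t] by simp
      show ?thesis using True cube_nth[OF y, of k] pm_cases[OF y x, of k] d unfolding u_def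
        by (auto simp: jf_def kf_def field_simps)
    qed
  qed
  also have "\<dots> = (y $ k * (u - dl t) / (1 + dl t)) * kap t x y"
    unfolding kap_prod[OF x y] by (rule prod_replace)
  finally have e: "(\<Sum>\<sigma>\<in>cube. JJ t y x \<sigma> * \<sigma> $ k) = (y $ k * (u - dl t) / (1 + dl t)) * kap t x y" .
  have d: "1 + dl t > 0" using dl_bounds[OF t] by simp
  have yy: "y $ k * y $ k = 1" using cube_nth_sq[OF y] .
  have "y $ k * (u - dl t) = x $ k - dl t * y $ k"
    unfolding u_def using yy by (simp add: algebra_simps)
  then show ?thesis unfolding e using d by simp
qed

lemma coupling_bound:
  fixes y :: "real^'n::finite" and F :: "real^'n \<Rightarrow> real^'n"
  assumes t: "t > 0" and y: "y \<in> cube"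
    and hyp: "\<And>x \<sigma>. x \<in> cube \<Longrightarrow> \<sigma> \<in> cube \<Longrightarrow> F x \<bullet> \<sigma> \<le> S \<sigma>"
  shows "(\<Sum>x\<in>cube. F x \<bullet> (kap t x y *\<^sub>R (x - dl t *\<^sub>R y))) \<le> (1 + dl t) * (1/2) ^ CARD('n) * (\<Sum>\<sigma>\<in>cube. S \<sigma>)"
proof -
  have vec: "kap t x y *\<^sub>R (x - dl t *\<^sub>R y) = (\<Sum>\<sigma>\<in>cube. ((1 + dl t) * JJ t y x \<sigma>) *\<^sub>R \<sigma>)" if x: "x \<in> cube" for x
  proof -
    have "(kap t x y *\<^sub>R (x - dl t *\<^sub>R y)) $ k = (\<Sum>\<sigma>\<in>cube. ((1 + dl t) * JJ t y x \<sigma>) *\<^sub>R \<sigma>) $ k" for k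
    proof -
      have "(\<Sum>\<sigma>\<in>cube. ((1 + dl t) * JJ t y x \<sigma>) *\<^sub>R \<sigma>) $ k = (\<Sum>\<sigma>\<in>cube. JJ t y x \<sigma> * \<sigma> $ k) * (1 + dl t)"
      proof -
        have "(\<Sum>\<sigma>\<in>cube. ((1 + dl t) * JJ t y x \<sigma>) *\<^sub>R \<sigma>) $ k = (\<Sum>\<sigma>\<in>cube. (JJ t y x \<sigma> * \<sigma> $ k) * (1 + dl t))"
          by (simp add: sum_component mult_ac)
        then show ?thesis by (simp add: sum_distrib_right)
      qed
      also have "\<dots> = kap t x y * (x $ k - dl t * y $ k)" by (rule JJ_mean[OF x y t])
      finally show ?thesis by simp
    qed
    then show ?thesis by (simp add: vec_eq_iff)
  qed
  have "(\<Sum>x\<in>cube. F x \<bullet> (kap t x y *\<^sub>R (x - dl t *\<^sub>R y))) = (\<Sum>x\<in>cube. \<Sum>\<sigma>\<in>cube. ((1 + dl t) * JJ t y x \<sigma>) * (F x \<bullet> \<sigma>))"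
    by (intro sum.cong refl) (simp add: vec inner_sum_right)
  also have "\<dots> \<le> (\<Sum>x\<in>cube. \<Sum>\<sigma>\<in>cube. ((1 + dl t) * JJ t y x \<sigma>) * S \<sigma>)"
    using dl_bounds[OF t] JJ_nonneg[OF t] hyp by (intro sum_mono mult_left_mono) (auto intro!: mult_nonneg_nonneg)
  also have "\<dots> = (\<Sum>\<sigma>\<in>cube. (1 + dl t) * S \<sigma> * (\<Sum>x\<in>cube. JJ t y x \<sigma>))"
    by (subst sum.swap) (simp add: sum_distrib_left mult_ac)
  also have "\<dots> = (\<Sum>\<sigma>\<in>cube. (1 + dl t) * S \<sigma> * (1/2) ^ CARD('n))"
    using JJ_sum_x[OF _ y] by (intro sum.cong refl) simp
  also have "\<dots> = (1 + dl t) * (1/2) ^ CARD('n) * (\<Sum>\<sigma>\<in>cube. S \<sigma>)"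
    by (simp add: sum_distrib_left sum_distrib_right mult_ac)
  finally show ?thesis .
qed



lemma Z_pos:
  assumes nn: "\<And>z. p z \<ge> 0" and s1: "(\<Sum>z\<in>cube. p z) = 1"
  shows "(\<Sum>z\<in>cube. p z * exp (\<theta> \<bullet> z)) > 0"
proof -
  have "\<exists>z\<in>cube. p z > 0"
  proof (rule ccontr)
    assume a: "\<not> (\<exists>z\<in>cube. p z > 0)"
    then have "\<forall>z\<in>cube. p z = 0" using nn by (metis not_less order_antisym)
    then have "(\<Sum>z\<in>cube. p z) = 0" by simp
    with s1 show False by simp
  qed
  then obtain z where z: "z \<in> cube" "p z > 0" by blast
  show ?thesis
    by (rule sum_pos2[OF finite_cube z(1)]) (use z nn in auto)
qed

definition WW :: "real \<Rightarrow> (real^'n \<Rightarrow> real) \<Rightarrow> real^'n \<Rightarrow> real" where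
  "WW t p x = (\<Sum>z\<in>cube. p z * kap t x z)"

lemma WW_nonneg: "(\<And>z. p z \<ge> 0) \<Longrightarrow> WW t p x \<ge> 0"
  unfolding WW_def by (intro sum_nonneg mult_nonneg_nonneg kap_nonneg) auto

lemma WW_tilt:
  fixes x :: "real^'n::finite"
  assumes nn: "\<And>z. p z \<ge> 0" and s1: "(\<Sum>z\<in>cube. p z) = 1" and supp: "\<And>z. z \<notin> cube \<Longrightarrow> p z = 0"
  shows "WW t p x * tilt (t *\<^sub>R x) p y = p y * kap t x y"
proof (cases "y \<in> cube")
  case False then show ?thesis using supp by (simp add: tilt_def)
next
  case True
  define Z where "Z = (\<Sum>z\<in>cube. p z * exp (t * (x \<bullet> z)))"
  have Z: "Z > 0" unfolding Z_def using Z_pos[OF nn s1, of "t *\<^sub>R x"] by simp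
  have W: "WW t p x = Z / cc t ^ CARD('n)"
    by (simp add: WW_def Z_def kap_alt sum_divide_distrib)
  show ?thesis using True Z cc_pos[of t]
    by (simp add: W tilt_def Z_def[symmetric] kap_alt)
qed

lemma tr_bound:
  fixes x :: "real^'n::finite"
  assumes nn: "\<And>z. p z \<ge> 0" and s1: "(\<Sum>z\<in>cube. p z) = 1" and x: "x \<in> cube" and t: "t > 0"
  shows "(\<Sum>i\<in>UNIV. Hcov (tilt (t *\<^sub>R x) p) $ i $ i) \<le> exp (2 * t) *
     (\<Sum>i\<in>UNIV. (\<Sum>y\<in>cube. tilt (t *\<^sub>R x) p y * (gvec p y $ i) * y $ i)
          - (\<Sum>y\<in>cube. tilt (t *\<^sub>R x) p y * (gvec p y $ i)) * (\<Sum>y\<in>cube. tilt (t *\<^sub>R x) p y * y $ i))"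
proof -
  have Z: "(\<Sum>z\<in>cube. p z * exp ((t *\<^sub>R x) \<bullet> z)) > 0" by (rule Z_pos[OF nn s1])
  have M: "max (exp (2 * (t *\<^sub>R x) $ i)) (1 / exp (2 * (t *\<^sub>R x) $ i)) = exp (2 * t)" for i
  proof -
    have e1: "1 / exp (2 * t) \<le> exp (2 * t)"
    proof -
      have a: "exp (2 * t) \<ge> 1" using t by simp
      then have b: "1 / exp (2 * t) \<le> 1" by simp
      show ?thesis using a b by linarith
    qed
    have e2: "exp (- (2 * t)) = 1 / exp (2 * t)" by (simp add: exp_minus field_simps)
    show ?thesis using cube_nth[OF x, of i] e1 e2 by (auto simp: max_def)
  qed
  show ?thesis
    apply (subst sum_distrib_left)
  proof (intro sum_mono)
    fix i
    show "Hcov (tilt (t *\<^sub>R x) p) $ i $ i \<le> exp (2 * t) *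
     ((\<Sum>y\<in>cube. tilt (t *\<^sub>R x) p y * (gvec p y $ i) * y $ i)
          - (\<Sum>y\<in>cube. tilt (t *\<^sub>R x) p y * (gvec p y $ i)) * (\<Sum>y\<in>cube. tilt (t *\<^sub>R x) p y * y $ i))"
      using H_diag(2)[OF nn Z, of i] unfolding M .
  qed
qed

definition FF :: "real \<Rightarrow> (real^'n \<Rightarrow> real) \<Rightarrow> real^'n \<Rightarrow> real^'n" where
  "FF t p x = (\<Sum>y\<in>cube. tilt (t *\<^sub>R x) p y *\<^sub>R gvec p y)"

definition GG :: "real \<Rightarrow> (real^'n \<Rightarrow> real) \<Rightarrow> real^'n \<Rightarrow> real" where
  "GG t p x = (\<Sum>i\<in>UNIV. (\<Sum>y\<in>cube. tilt (t *\<^sub>R x) p y * (gvec p y $ i) * y $ i)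
          - (\<Sum>y\<in>cube. tilt (t *\<^sub>R x) p y * (gvec p y $ i)) * (\<Sum>y\<in>cube. tilt (t *\<^sub>R x) p y * y $ i))"

lemma key_identity:
  fixes p :: "real^'n::finite \<Rightarrow> real"
  assumes nn: "\<And>z. p z \<ge> 0" and s1: "(\<Sum>z\<in>cube. p z) = 1" and supp: "\<And>z. z \<notin> cube \<Longrightarrow> p z = 0"
  shows "dl t * (\<Sum>x\<in>cube. WW t p x * GG t p x) =
     (\<Sum>y\<in>cube. p y * (\<Sum>x\<in>cube. FF t p x \<bullet> (kap t x y *\<^sub>R (x - dl t *\<^sub>R y))))"
proof -
  define \<rho> where "\<rho> = (\<lambda>x. tilt (t *\<^sub>R x) p)"
  define u where "u = gvec p"
  define J where "J = (\<lambda>x y. p y * kap t x y)"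
  define B where "B = (\<lambda>x. \<Sum>y\<in>cube. J x y *\<^sub>R y)"
  have WJ: "WW t p x * \<rho> x y = J x y" for x y
    unfolding \<rho>_def J_def by (rule WW_tilt[OF nn s1 supp])
  have Fc: "FF t p x $ i = (\<Sum>y\<in>cube. \<rho> x y * u y $ i)" for x i
    by (simp add: FF_def \<rho>_def u_def sum_component)
  have Bc: "B x $ i = (\<Sum>y\<in>cube. J x y * y $ i)" for x i
    by (simp add: B_def sum_component)
  have WS: "(\<Sum>y\<in>cube. J x y) = WW t p x" for x
    by (simp add: J_def WW_def)
  have a: "WW t p x * GG t p x = (\<Sum>y\<in>cube. J x y * (u y \<bullet> y)) - FF t p x \<bullet> B x" for x
  proof -
    have p1: "WW t p x * (\<Sum>y\<in>cube. \<rho> x y * (u y $ i) * y $ i) = (\<Sum>y\<in>cube. J x y * (u y $ i * y $ i))" for i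
    proof -
      have "(\<Sum>y\<in>cube. J x y * (u y $ i * y $ i)) = (\<Sum>y\<in>cube. (WW t p x * \<rho> x y) * (u y $ i * y $ i))"
        by (simp only: WJ)
      then show ?thesis by (simp add: sum_distrib_left mult.assoc)
    qed
    have p2: "WW t p x * (\<Sum>y\<in>cube. \<rho> x y * y $ i) = B x $ i" for i
    proof -
      have "B x $ i = (\<Sum>y\<in>cube. (WW t p x * \<rho> x y) * y $ i)" unfolding Bc by (simp only: WJ)
      then show ?thesis by (simp add: sum_distrib_left mult.assoc)
    qed
    have "WW t p x * GG t p x = (\<Sum>i\<in>UNIV. WW t p x * (\<Sum>y\<in>cube. \<rho> x y * (u y $ i) * y $ i)
          - (\<Sum>y\<in>cube. \<rho> x y * (u y $ i)) * (WW t p x * (\<Sum>y\<in>cube. \<rho> x y * y $ i)))"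
      unfolding GG_def \<rho>_def u_def
      by (subst sum_distrib_left) (rule sum.cong, simp_all add: algebra_simps)
    also have "\<dots> = (\<Sum>i\<in>UNIV. (\<Sum>y\<in>cube. J x y * (u y $ i * y $ i)) - FF t p x $ i * B x $ i)"
      unfolding p1 p2 Fc by simp
    also have "\<dots> = (\<Sum>y\<in>cube. J x y * (u y \<bullet> y)) - FF t p x \<bullet> B x"
      by (simp add: sum_subtractf inner_cart sum_distrib_left) (rule sum.swap)
    finally show ?thesis .
  qed
  have c: "(\<Sum>x\<in>cube. FF t p x \<bullet> (WW t p x *\<^sub>R x)) = dl t * (\<Sum>y\<in>cube. p y * (u y \<bullet> y))"
  proof -
    have "(\<Sum>x\<in>cube. FF t p x \<bullet> (WW t p x *\<^sub>R x)) = (\<Sum>x\<in>cube. \<Sum>y\<in>cube. J x y * (u y \<bullet> x))"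
      by (simp add: FF_def inner_sum_left WJ[symmetric] u_def \<rho>_def sum_distrib_left mult_ac)
    also have "\<dots> = (\<Sum>y\<in>cube. p y * (u y \<bullet> (\<Sum>x\<in>cube. kap t x y *\<^sub>R x)))"
      by (subst sum.swap) (simp add: J_def inner_sum_right sum_distrib_left mult_ac)
    also have "\<dots> = (\<Sum>y\<in>cube. p y * (u y \<bullet> (dl t *\<^sub>R y)))"
    proof (intro sum.cong refl)
      fix y :: "real^'n" assume y: "y \<in> cube"
      have "(\<Sum>x\<in>cube. kap t x y *\<^sub>R x) = dl t *\<^sub>R y"
        using kap_mean[OF y] by (simp add: vec_eq_iff sum_component)
      then show "p y * (u y \<bullet> (\<Sum>x\<in>cube. kap t x y *\<^sub>R x)) = p y * (u y \<bullet> (dl t *\<^sub>R y))" by simp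
    qed
    also have "\<dots> = dl t * (\<Sum>y\<in>cube. p y * (u y \<bullet> y))"
      by (simp add: sum_distrib_left mult_ac)
    finally show ?thesis .
  qed
  have d: "(\<Sum>x\<in>cube. \<Sum>y\<in>cube. J x y * (u y \<bullet> y)) = (\<Sum>y\<in>cube. p y * (u y \<bullet> y))"
  proof -
    have "(\<Sum>x\<in>cube. \<Sum>y\<in>cube. J x y * (u y \<bullet> y)) = (\<Sum>y\<in>cube. p y * (u y \<bullet> y) * (\<Sum>x\<in>cube. kap t x y))"
      by (subst sum.swap) (simp add: J_def sum_distrib_left mult_ac)
    also have "\<dots> = (\<Sum>y\<in>cube. p y * (u y \<bullet> y))"
      by (intro sum.cong refl) (metis kap_sum mult_1_right)
    finally show ?thesis .
  qed
  have rhs: "(\<Sum>y\<in>cube. p y * (\<Sum>x\<in>cube. FF t p x \<bullet> (kap t x y *\<^sub>R (x - dl t *\<^sub>R y))))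
      = (\<Sum>x\<in>cube. FF t p x \<bullet> (WW t p x *\<^sub>R x)) - dl t * (\<Sum>x\<in>cube. FF t p x \<bullet> B x)"
  proof -
    have "(\<Sum>y\<in>cube. p y * (\<Sum>x\<in>cube. FF t p x \<bullet> (kap t x y *\<^sub>R (x - dl t *\<^sub>R y))))
       = (\<Sum>x\<in>cube. \<Sum>y\<in>cube. J x y * (FF t p x \<bullet> x) - dl t * (J x y * (FF t p x \<bullet> y)))"
      by (subst sum.swap) (simp add: sum_distrib_left J_def inner_diff_right algebra_simps)
    also have "\<dots> = (\<Sum>x\<in>cube. WW t p x * (FF t p x \<bullet> x) - dl t * (FF t p x \<bullet> B x))"
      by (simp add: sum_subtractf sum_distrib_right[symmetric] sum_distrib_left[symmetric] WS B_def inner_sum_right)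
    also have "\<dots> = (\<Sum>x\<in>cube. FF t p x \<bullet> (WW t p x *\<^sub>R x)) - dl t * (\<Sum>x\<in>cube. FF t p x \<bullet> B x)"
      by (simp add: sum_subtractf sum_distrib_left)
    finally show ?thesis .
  qed
  show ?thesis
    unfolding rhs c using a d by (simp add: sum_subtractf right_diff_distrib)
qed

definition SS :: "(real^'n \<Rightarrow> real) \<Rightarrow> real^'n \<Rightarrow> real" where
  "SS p v = Max ((\<lambda>k. k \<bullet> v) ` (gvec p ` cube))"

lemma SS_ge: "y \<in> cube \<Longrightarrow> gvec p y \<bullet> v \<le> SS p v"
  unfolding SS_def by (intro Max_ge) auto

lemma main_bound:
  fixes p :: "real^'n::finite \<Rightarrow> real"
  assumes nn: "\<And>z. p z \<ge> 0" and s1: "(\<Sum>z\<in>cube. p z) = 1" and supp: "\<And>z. z \<notin> cube \<Longrightarrow> p z = 0"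
    and t: "t > 0"
  shows "(\<Sum>x\<in>cube. WW t p x * (\<Sum>i\<in>UNIV. Hcov (tilt (t *\<^sub>R x) p) $ i $ i))
     \<le> exp (2 * t) * ((1 + dl t) * (1/2) ^ CARD('n) * (\<Sum>\<sigma>\<in>cube. SS p \<sigma>)) / dl t"
proof -
  have dl: "dl t > 0" using dl_bounds[OF t] by simp
  have step1: "(\<Sum>x\<in>cube. WW t p x * (\<Sum>i\<in>UNIV. Hcov (tilt (t *\<^sub>R x) p) $ i $ i))
      \<le> (\<Sum>x\<in>cube. WW t p x * (exp (2 * t) * GG t p x))"
    using tr_bound[OF nn s1 _ t] WW_nonneg[OF nn] unfolding GG_def
    by (intro sum_mono mult_left_mono) auto
  have hyp: "FF t p x \<bullet> \<sigma> \<le> SS p \<sigma>" if "x \<in> cube" "\<sigma> \<in> cube" for x \<sigma>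
  proof -
    have Z: "(\<Sum>z\<in>cube. p z * exp ((t *\<^sub>R x) \<bullet> z)) > 0" by (rule Z_pos[OF nn s1])
    have "FF t p x \<bullet> \<sigma> = (\<Sum>y\<in>cube. tilt (t *\<^sub>R x) p y * (gvec p y \<bullet> \<sigma>))"
      by (simp add: FF_def inner_sum_left)
    also have "\<dots> \<le> (\<Sum>y\<in>cube. tilt (t *\<^sub>R x) p y * SS p \<sigma>)"
      using tilt_nonneg[OF nn Z] SS_ge by (intro sum_mono mult_left_mono) auto
    also have "\<dots> = SS p \<sigma>" using tilt_sum[OF Z] by (simp add: sum_distrib_right[symmetric])
    finally show ?thesis .
  qed
  have step2: "dl t * (\<Sum>x\<in>cube. WW t p x * GG t p x) \<le> (1 + dl t) * (1/2) ^ CARD('n) * (\<Sum>\<sigma>\<in>cube. SS p \<sigma>)"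
  proof -
    have "dl t * (\<Sum>x\<in>cube. WW t p x * GG t p x) = (\<Sum>y\<in>cube. p y * (\<Sum>x\<in>cube. FF t p x \<bullet> (kap t x y *\<^sub>R (x - dl t *\<^sub>R y))))"
      by (rule key_identity[OF nn s1 supp])
    also have "\<dots> \<le> (\<Sum>y\<in>cube. p y * ((1 + dl t) * (1/2) ^ CARD('n) * (\<Sum>\<sigma>\<in>cube. SS p \<sigma>)))"
      using coupling_bound[OF t _ hyp] nn by (intro sum_mono mult_left_mono) auto
    also have "\<dots> = (1 + dl t) * (1/2) ^ CARD('n) * (\<Sum>\<sigma>\<in>cube. SS p \<sigma>)"
      using s1 by (simp add: sum_distrib_right[symmetric])
    finally show ?thesis .
  qed
  have "(\<Sum>x\<in>cube. WW t p x * (exp (2 * t) * GG t p x)) = exp (2 * t) * (\<Sum>x\<in>cube. WW t p x * GG t p x)"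
    by (simp add: sum_distrib_left mult_ac)
  also have "\<dots> \<le> exp (2 * t) * ((1 + dl t) * (1/2) ^ CARD('n) * (\<Sum>\<sigma>\<in>cube. SS p \<sigma>) / dl t)"
    using step2 dl by (intro mult_left_mono) (auto simp: pos_le_divide_eq mult.commute)
  finally show ?thesis using step1 by simp
qed



lemma tilt_meas[measurable]: "(\<lambda>\<theta>. tilt \<theta> p y) \<in> borel_measurable borel"
  unfolding tilt_def by measurable

lemma gvec_tilt_meas[measurable]: "(\<lambda>\<theta>. gvec (tilt \<theta> p) y $ i) \<in> borel_measurable borel"
  unfolding gvec_def Let_def vec_lambda_beta by measurable

lemma Hcov_meas[measurable]: "(\<lambda>\<theta>. Hcov (tilt \<theta> p) $ i $ j) \<in> borel_measurable borel"
  unfolding Hcov_def vec_lambda_beta by measurable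

definition JK :: "real \<Rightarrow> nat set" where
  "JK k = {j\<in>{1..CARD('n)}. \<lceil>k\<rceil> \<le> int j}"

lemma Trk_sorted:
  fixes A :: "real^'n^'n" and xs :: "'n list"
  assumes dis: "distinct xs" and st: "set xs = UNIV" and so: "sorted (rev (map (\<lambda>i. A $ i $ i) xs))"
  shows "Trk k A = (\<Sum>j\<in>{j\<in>{1..CARD('n)}. \<lceil>k\<rceil> \<le> int j}. A $ (xs ! (j - 1)) $ (xs ! (j - 1)))"
proof -
  define d where "d = (\<lambda>i. A $ i $ i)"
  have len: "length xs = CARD('n)" using distinct_card[OF dis] st by simp
  have M: "image_mset d (mset_set (UNIV :: 'n set)) = mset (map d xs)"
    using mset_set_set[OF dis] st by simp
  have srt: "sort (map d xs) = rev (map d xs)"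
    by (rule properties_for_sort) (use so in \<open>simp_all add: d_def\<close>)
  have L: "rev (sorted_list_of_multiset (image_mset d (mset_set (UNIV :: 'n set)))) = map d xs"
  proof -
    have "rev (sorted_list_of_multiset (mset (map d xs))) = map d xs"
      by (simp only: sorted_list_of_multiset_mset srt rev_rev_ident)
    then show ?thesis unfolding M .
  qed
  show ?thesis
    unfolding Trk_def Let_def d_def[symmetric] L
    using len by (intro sum.cong refl) (auto simp: d_def)
qed

lemma sorting_exists:
  fixes d :: "'n::finite \<Rightarrow> real"
  shows "\<exists>xs. distinct xs \<and> set xs = UNIV \<and> sorted (rev (map d xs))"
proof -
  obtain xs0 :: "'n list" where xs0: "set xs0 = UNIV" "distinct xs0"
    using finite_distinct_list[of "UNIV :: 'n set"] by auto
  define xs where "xs = rev (sort_key d xs0)"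
  have "distinct xs" "set xs = UNIV" using xs0 by (auto simp: xs_def)
  moreover have "sorted (rev (map d xs))" by (simp add: xs_def rev_map[symmetric])
  ultimately show ?thesis by blast
qed

lemma Trk_le_trace:
  fixes A :: "real^'n^'n"
  assumes nn: "\<And>i. A $ i $ i \<ge> 0"
  shows "Trk k A \<le> (\<Sum>i\<in>UNIV. A $ i $ i)"
proof -
  obtain xs where xs: "distinct xs" "set xs = UNIV" "sorted (rev (map (\<lambda>i. A $ i $ i) xs))"
    using sorting_exists by blast
  have len: "length xs = CARD('n)" using distinct_card[OF xs(1)] xs(2) by simp
  have "Trk k A = (\<Sum>j\<in>{j\<in>{1..CARD('n)}. \<lceil>k\<rceil> \<le> int j}. A $ (xs ! (j - 1)) $ (xs ! (j - 1)))"
    by (rule Trk_sorted[OF xs])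
  also have "\<dots> \<le> (\<Sum>j\<in>{1..CARD('n)}. A $ (xs ! (j - 1)) $ (xs ! (j - 1)))"
    using nn by (intro sum_mono2) auto
  also have "\<dots> = (\<Sum>j\<in>{0..<CARD('n)}. A $ (xs ! j) $ (xs ! j))"
  proof -
    have "(\<Sum>j\<in>{0..<CARD('n)}. A $ (xs ! j) $ (xs ! j)) = (\<Sum>j\<in>Suc ` {0..<CARD('n)}. A $ (xs ! (j - 1)) $ (xs ! (j - 1)))"
      by (subst sum.reindex) auto
    also have "Suc ` {0..<CARD('n)} = {1..CARD('n)}" by (auto simp: image_iff)
    finally show ?thesis by simp
  qed
  also have "\<dots> = sum_list (map (\<lambda>i. A $ i $ i) xs)"
    by (simp add: sum_list_sum_nth len)
  also have "\<dots> = (\<Sum>i\<in>UNIV. A $ i $ i)"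
    using xs by (simp add: sum_list_distinct_conv_sum_set)
  finally show ?thesis .
qed

lemma Trk_set_meas:
  fixes p :: "real^'n::finite \<Rightarrow> real"
  shows "{\<theta>. Trk k (Hcov (tilt \<theta> p)) \<le> c} \<in> sets borel"
proof -
  define P where "P = {xs :: 'n list. distinct xs \<and> set xs = UNIV}"
  have finP: "finite P"
  proof (rule finite_subset[OF _ finite_lists_length_le[of "UNIV :: 'n set" "CARD('n)"]])
    show "P \<subseteq> {xs. set xs \<subseteq> UNIV \<and> length xs \<le> CARD('n)}"
      unfolding P_def using distinct_card by fastforce
  qed simp
  define d where "d = (\<lambda>\<theta> i. Hcov (tilt \<theta> p) $ i $ i)"
  define Pc where "Pc = (\<lambda>xs. {\<theta>. (\<forall>i\<in>{..<CARD('n)}. \<forall>j\<in>{..<CARD('n)}. i \<le> j \<longrightarrow> d \<theta> (xs ! j) \<le> d \<theta> (xs ! i))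
       \<and> (\<Sum>j\<in>{j\<in>{1..CARD('n)}. \<lceil>k\<rceil> \<le> int j}. d \<theta> (xs ! (j - 1))) \<le> c})"
  have sortiff: "sorted (rev (map (d \<theta>) xs)) \<longleftrightarrow> (\<forall>i\<in>{..<CARD('n)}. \<forall>j\<in>{..<CARD('n)}. i \<le> j \<longrightarrow> d \<theta> (xs ! j) \<le> d \<theta> (xs ! i))"
    if "xs \<in> P" for xs \<theta>
  proof -
    have len: "length xs = CARD('n)" using that distinct_card[of xs] by (simp add: P_def)
    show ?thesis unfolding sorted_rev_iff_nth_mono using len by auto
  qed
  have eq: "{\<theta>. Trk k (Hcov (tilt \<theta> p)) \<le> c} = (\<Union>xs\<in>P. Pc xs)"
  proof (intro set_eqI iffI)
    fix \<theta> assume "\<theta> \<in> {\<theta>. Trk k (Hcov (tilt \<theta> p)) \<le> c}"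
    then have le: "Trk k (Hcov (tilt \<theta> p)) \<le> c" by simp
    obtain xs where xs: "distinct xs" "set xs = UNIV" "sorted (rev (map (d \<theta>) xs))"
      using sorting_exists by blast
    have P: "xs \<in> P" using xs by (simp add: P_def)
    have "Trk k (Hcov (tilt \<theta> p)) = (\<Sum>j\<in>{j\<in>{1..CARD('n)}. \<lceil>k\<rceil> \<le> int j}. d \<theta> (xs ! (j - 1)))"
      unfolding d_def by (rule Trk_sorted[OF xs(1,2)]) (use xs(3) in \<open>simp add: d_def\<close>)
    then have "\<theta> \<in> Pc xs" using le sortiff[OF P] xs(3) by (simp add: Pc_def)
    then show "\<theta> \<in> (\<Union>xs\<in>P. Pc xs)" using P by blast
  next
    fix \<theta> assume "\<theta> \<in> (\<Union>xs\<in>P. Pc xs)"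
    then obtain xs where P: "xs \<in> P" and th: "\<theta> \<in> Pc xs" by blast
    have so: "sorted (rev (map (d \<theta>) xs))" using th sortiff[OF P] by (simp add: Pc_def)
    have "Trk k (Hcov (tilt \<theta> p)) = (\<Sum>j\<in>{j\<in>{1..CARD('n)}. \<lceil>k\<rceil> \<le> int j}. d \<theta> (xs ! (j - 1)))"
      unfolding d_def by (rule Trk_sorted) (use P so in \<open>simp_all add: d_def P_def\<close>)
    then show "\<theta> \<in> {\<theta>. Trk k (Hcov (tilt \<theta> p)) \<le> c}" using th by (simp add: Pc_def)
  qed
  have mPc: "Pc xs \<in> sets borel" for xs
    unfolding Pc_def d_def by measurable
  show ?thesis unfolding eq using finP mPc by (intro sets.finite_UN) auto
qed



lemma WW_sum:
  fixes p :: "real^'n::finite \<Rightarrow> real"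
  assumes s1: "(\<Sum>z\<in>cube. p z) = 1"
  shows "(\<Sum>x\<in>cube. WW t p x) = 1"
proof -
  have "(\<Sum>x\<in>cube. WW t p x) = (\<Sum>z\<in>cube. p z * (\<Sum>x\<in>cube. kap t x z))"
    unfolding WW_def by (subst sum.swap) (simp add: sum_distrib_left)
  also have "\<dots> = (\<Sum>z\<in>cube. p z)"
    by (intro sum.cong refl) (metis kap_sum mult_1_right)
  finally show ?thesis using s1 by simp
qed

lemma cube_norm:
  fixes x :: "real^'n::finite"
  assumes "x \<in> cube" shows "norm x = sqrt (real CARD('n))"
proof -
  have "x \<bullet> x = (\<Sum>i\<in>UNIV. x $ i * x $ i)" by (rule inner_cart)
  also have "\<dots> = real CARD('n)" using cube_nth_sq[OF assms] by simp
  finally show ?thesis by (simp add: norm_eq_sqrt_inner)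
qed

lemma exp_small: fixes s :: real assumes "0 \<le> s" "s \<le> 1/2" shows "exp s \<le> 2"
  using exp_bound_half[of s] assms by simp

lemma dl_lower:
  assumes e: "0 < e" "e \<le> 1/4"
  shows "dl e \<ge> e / 2"
proof -
  define a where "a = exp e"
  have a: "a > 0" by (simp add: a_def)
  have b: "exp (- e) = 1 / a" by (simp add: a_def exp_minus field_simps)
  have a2: "a * a \<ge> 1 + 2 * e"
  proof -
    have "a * a = exp (2 * e)" by (simp add: a_def exp_add[symmetric])
    moreover have "1 + 2 * e \<le> exp (2 * e)" by (rule exp_ge_add_one_self)
    ultimately show ?thesis by simp
  qed
  have key: "(2 - e) * (a * a) \<ge> 2 + e"
  proof -
    have "(2 - e) * (a * a) \<ge> (2 - e) * (1 + 2 * e)" using a2 e by (intro mult_left_mono) auto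
    moreover have "(2 - e) * (1 + 2 * e) \<ge> 2 + e" using e by (simp add: algebra_simps)
    ultimately show ?thesis by linarith
  qed
  have "dl e = (a * a - 1) / (a * a + 1)"
  proof -
    have n: "a - 1 / a = (a * a - 1) / a" using a by (simp add: field_simps)
    have d: "a + 1 / a = (a * a + 1) / a" using a by (simp add: field_simps)
    have "dl e = (a - 1 / a) / (a + 1 / a)" unfolding dl_def cc_def b a_def[symmetric] by simp
    also have "\<dots> = (a * a - 1) / (a * a + 1)" unfolding n d using a by (simp add: divide_divide_eq_left)
    finally show ?thesis .
  qed
  moreover have "e / 2 \<le> (a * a - 1) / (a * a + 1)"
  proof -
    have pos: "a * a + 1 > 0" by (metis add_pos_nonneg zero_le_square zero_less_one add.commute)
    have "e * (a * a + 1) \<le> 2 * (a * a - 1)" using key by (simp add: algebra_simps)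
    then show ?thesis using pos by (simp add: le_divide_eq mult.commute)
  qed
  ultimately show ?thesis by simp
qed

lemma cube_ne: "(cube :: (real^'n::finite) set) \<noteq> {}"
proof -
  have "((\<chi> i. 1) :: real^'n) \<in> cube" by (simp add: cube_def)
  then show ?thesis by blast
qed

lemma E_bound:
  fixes \<nu> :: "(real^'n::finite) pmf"
  assumes supp: "set_pmf \<nu> \<subseteq> cube" and e: "0 < \<epsilon>" "\<epsilon> < 1/16"
  shows "(\<Sum>x\<in>cube. WW \<epsilon> (pmf \<nu>) x * (\<Sum>i\<in>UNIV. Hcov (tilt (\<epsilon> *\<^sub>R x) (pmf \<nu>)) $ i $ i))
     \<le> 2^8 * GW (gvec (pmf \<nu>) ` cube) / \<epsilon>"
proof -
  define p where "p = pmf \<nu>"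
  have nn: "\<And>z. p z \<ge> 0" by (simp add: p_def pmf_nonneg)
  have s1: "(\<Sum>z\<in>cube. p z) = 1" unfolding p_def by (rule sum_pmf_eq_1[OF finite_cube supp])
  have sp: "\<And>z. z \<notin> cube \<Longrightarrow> p z = 0" using supp by (auto simp: p_def pmf_eq_0_set_pmf)
  define D where "D = GW (gvec p ` cube)"
  define E where "E = (\<Sum>x\<in>cube. WW \<epsilon> p x * (\<Sum>i\<in>UNIV. Hcov (tilt (\<epsilon> *\<^sub>R x) p) $ i $ i))"
  define Sg where "Sg = (\<Sum>\<sigma>\<in>cube. SS p \<sigma>)"
  define A where "A = (1/2) ^ CARD('n) * Sg"
  define \<delta> where "\<delta> = dl \<epsilon>"
  have \<delta>: "\<delta> \<ge> \<epsilon> / 2" "\<delta> < 1" "\<delta> > 0" using dl_lower[of \<epsilon>] dl_bounds[of \<epsilon>] e by (auto simp: \<delta>_def)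
  have tr0: "0 \<le> (\<Sum>i\<in>UNIV. Hcov (tilt (\<epsilon> *\<^sub>R x) p) $ i $ i)" for x
  proof -
    have Z: "(\<Sum>z\<in>cube. p z * exp ((\<epsilon> *\<^sub>R x) \<bullet> z)) > 0" by (rule Z_pos[OF nn s1])
    show ?thesis using H_diag(1)[OF nn Z] by (intro sum_nonneg) auto
  qed
  have E0: "E \<ge> 0"
  proof -
    have W0: "WW \<epsilon> p x \<ge> 0" for x by (rule WW_nonneg[of p, OF nn])
    show ?thesis unfolding E_def using tr0 W0 by (meson mult_nonneg_nonneg sum_nonneg)
  qed
  define K0 where "K0 = exp (2 * \<epsilon>) * (1 + \<delta>) / \<delta>"
  have mb: "E \<le> K0 * A"
    using main_bound[OF nn s1 sp e(1)] unfolding E_def K0_def A_def Sg_def \<delta>_def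
    by (simp add: mult_ac)
  have K0pos: "K0 > 0" using \<delta> by (simp add: K0_def)
  have A0: "A \<ge> 0"
  proof (rule ccontr)
    assume "\<not> A \<ge> 0"
    then have "K0 * A < 0" using K0pos by (simp add: mult_pos_neg)
    then show False using mb E0 by linarith
  qed
  have GWl: "sqrt (2/pi) * Sg / 2 ^ CARD('n) \<le> D"
    unfolding D_def Sg_def SS_def
  proof (rule GW_lower)
    show "finite (gvec p ` cube)" by simp
    show "gvec p ` cube \<noteq> {}" using cube_ne by simp
    show "\<And>k i. k \<in> gvec p ` cube \<Longrightarrow> \<bar>k $ i\<bar> \<le> 1" using gvec_bound[OF nn] by auto
  qed
  have AS: "Sg / 2 ^ CARD('n) = A" by (simp add: A_def power_one_over)
  have sq: "sqrt (2/pi) \<ge> 1/2"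
  proof -
    have "1/4 \<le> 2/pi" using pi_less_4 pi_gt_zero by (simp add: field_simps)
    then have "sqrt (1/4) \<le> sqrt (2/pi)" by (rule real_sqrt_le_mono)
    moreover have "sqrt (1/4 :: real) = 1/2" by (simp add: real_sqrt_divide)
    ultimately show ?thesis by simp
  qed
  have AD: "A \<le> 2 * D"
  proof -
    have "(1/2) * A \<le> sqrt (2/pi) * A" using sq A0 by (intro mult_right_mono) auto
    also have "\<dots> = sqrt (2/pi) * Sg / 2 ^ CARD('n)" unfolding AS[symmetric] by simp
    also have "\<dots> \<le> D" by (rule GWl)
    finally show ?thesis by simp
  qed
  have D0: "D \<ge> 0" using AD A0 GWl AS sq by (smt (verit) mult_nonneg_nonneg)
  have K0b: "K0 \<le> 8 / \<epsilon>"
  proof -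
    have ex: "exp (2 * \<epsilon>) \<le> 2" using e by (intro exp_small) auto
    have "K0 = exp (2 * \<epsilon>) * (1 + \<delta>) * (1 / \<delta>)" by (simp add: K0_def)
    also have "\<dots> \<le> 2 * 2 * (2 / \<epsilon>)"
    proof (intro mult_mono)
      show "exp (2 * \<epsilon>) \<le> 2" by (rule ex)
      show "1 + \<delta> \<le> 2" using \<delta> by simp
      show "1 / \<delta> \<le> 2 / \<epsilon>" using \<delta> e by (simp add: field_simps)
    qed (use \<delta> e in auto)
    finally show ?thesis by simp
  qed
  have "E \<le> K0 * A" by (rule mb)
  also have "\<dots> \<le> (8 / \<epsilon>) * A" using K0b A0 by (intro mult_right_mono)
  also have "\<dots> \<le> (8 / \<epsilon>) * (2 * D)" using AD e by (intro mult_left_mono) auto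
  also have "\<dots> \<le> 2^8 * D / \<epsilon>" using D0 e by (simp add: field_simps)
  finally show ?thesis unfolding E_def D_def p_def .
qed

lemma markov_fin:
  fixes w g :: "'a \<Rightarrow> real"
  assumes fin: "finite S" and TS: "T \<subseteq> S" and w: "\<And>x. x \<in> S \<Longrightarrow> w x \<ge> 0"
    and g: "\<And>x. x \<in> S \<Longrightarrow> g x \<ge> 0" and gT: "\<And>x. x \<in> T \<Longrightarrow> c < g x"
    and tot: "(\<Sum>x\<in>S. w x * g x) \<le> c / \<alpha>" and \<alpha>: "\<alpha> > 0"
  shows "(\<Sum>x\<in>T. w x) \<le> 1 / \<alpha>"
proof -
  have finT: "finite T" using finite_subset[OF TS fin] .
  have TSs: "(\<Sum>x\<in>T. w x * g x) \<le> (\<Sum>x\<in>S. w x * g x)"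
    using TS w g by (intro sum_mono2[OF fin]) auto
  have cT: "c * (\<Sum>x\<in>T. w x) \<le> (\<Sum>x\<in>T. w x * g x)"
    unfolding sum_distrib_left using TS w gT
  proof (intro sum_mono)
    fix x assume x: "x \<in> T"
    have "w x \<ge> 0" using w TS x by auto
    then show "c * w x \<le> w x * g x" using gT[OF x] by (simp add: mult.commute mult_right_mono)
  qed
  have S0: "(\<Sum>x\<in>S. w x * g x) \<ge> 0" using w g by (intro sum_nonneg) auto
  show ?thesis
  proof (cases "c > 0")
    case True
    have "c * (\<Sum>x\<in>T. w x) \<le> c / \<alpha>" using cT TSs tot by linarith
    then show ?thesis using True \<alpha> by (simp add: field_simps)
  next
    case False
    have "c / \<alpha> \<ge> 0" using S0 tot by linarith
    then have c0: "c = 0" using False \<alpha> by (simp add: zero_le_divide_iff)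
    have T0: "(\<Sum>x\<in>T. w x * g x) \<le> 0" using TSs tot c0 by simp
    have nnT: "\<forall>x\<in>T. w x * g x \<ge> 0" using TS w g by (auto intro: mult_nonneg_nonneg)
    have "(\<Sum>x\<in>T. w x * g x) \<ge> 0" using nnT by (intro sum_nonneg) auto
    then have "(\<Sum>x\<in>T. w x * g x) = 0" using T0 by linarith
    then have z: "\<forall>x\<in>T. w x * g x = 0"
      using sum_nonneg_eq_0_iff[OF finT, of "\<lambda>x. w x * g x"] nnT by blast
    have "\<forall>x\<in>T. w x = 0"
    proof
      fix x assume x: "x \<in> T"
      have "g x > 0" using gT[OF x] c0 by simp
      moreover have "w x * g x = 0" using z x by blast
      ultimately show "w x = 0" by simp
    qed
    then show ?thesis using \<alpha> by simp
  qed
qed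



theorem proposition3p6:
  fixes \<nu> :: "(real^'n) pmf"
  assumes "set_pmf \<nu> \<subseteq> cube"
  shows "\<forall>\<epsilon> \<alpha>. 0 < \<epsilon> \<and> \<epsilon> < 1/16 \<and> 1 < \<alpha> \<longrightarrow>
    (let n = real CARD('n); D = GW (gvec (pmf \<nu>) ` cube) in
     (\<exists>m :: (real^'n) measure.
        sets m = sets borel \<and> finite_measure m \<and>
        emeasure m (UNIV - (cball 0 (\<epsilon> * sqrt n) \<inter> unit_box)) = 0 \<and>
        (\<forall>\<phi> :: real^'n \<Rightarrow> real.
           (\<Sum>y\<in>cube. \<phi> y * pmf \<nu> y)
             = (\<integral>\<theta>. (\<Sum>y\<in>cube. \<phi> y * tilt \<theta> (pmf \<nu>) y) \<partial>m)) \<and>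
        measure m {\<theta>\<in>space m. Trk (2 * n * exp (- 1 / (32 * \<epsilon>\<^sup>2))) (Hcov (tilt \<theta> (pmf \<nu>)))
                                 \<le> 2^8 * \<alpha> * D / \<epsilon>} \<ge> 1 - 1/\<alpha> - 1/n \<and>
        (0 < D \<and> \<epsilon> \<le> 1 / (8 * sqrt (ln (4 * n / D))) \<longrightarrow>
          measure m {\<theta>\<in>space m. Trk 1 (Hcov (tilt \<theta> (pmf \<nu>))) \<le> 2^8 * \<alpha> * D / \<epsilon>}
            \<ge> 1 - 1/\<alpha> - 1/n)))"
proof (intro allI impI)
  fix \<epsilon> \<alpha> :: real
  assume H: "0 < \<epsilon> \<and> \<epsilon> < 1/16 \<and> 1 < \<alpha>"
  then have e: "0 < \<epsilon>" "\<epsilon> < 1/16" and al: "1 < \<alpha>" by auto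
  note supp = assms
  define p where "p = pmf \<nu>"
  have nn: "\<And>z. p z \<ge> 0" by (simp add: p_def pmf_nonneg)
  have s1: "(\<Sum>z\<in>cube. p z) = 1" unfolding p_def by (rule sum_pmf_eq_1[OF finite_cube supp])
  have sp: "\<And>z. z \<notin> cube \<Longrightarrow> p z = 0" using supp by (auto simp: p_def pmf_eq_0_set_pmf)
  define D where "D = GW (gvec (pmf \<nu>) ` cube)"
  define f where "f = (\<lambda>x::real^'n. if x \<in> cube then WW \<epsilon> p x else 0)"
  have fnn: "\<And>x. 0 \<le> f x" using WW_nonneg[of p, OF nn] by (simp add: f_def)
  have fsum: "(\<integral>\<^sup>+x. ennreal (f x) \<partial>count_space UNIV) = 1"
  proof -
    have "(\<integral>\<^sup>+x. ennreal (f x) \<partial>count_space UNIV) = (\<Sum>x\<in>cube. ennreal (f x))"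
      by (rule nn_integral_count_space') (auto simp: f_def)
    also have "\<dots> = ennreal (\<Sum>x\<in>cube. f x)" using fnn by simp
    also have "(\<Sum>x\<in>cube. f x) = 1" using WW_sum[OF s1] by (simp add: f_def)
    finally show ?thesis by simp
  qed
  define Q where "Q = embed_pmf f"
  have pmfQ: "pmf Q x = f x" for x unfolding Q_def by (rule pmf_embed_pmf[OF fnn fsum])
  have setQ: "set_pmf Q \<subseteq> cube" by (auto simp: set_pmf_eq pmfQ f_def)
  define m where "m = distr (measure_pmf Q) borel (\<lambda>x. \<epsilon> *\<^sub>R x)"
  have msc: "(\<lambda>x. \<epsilon> *\<^sub>R x) \<in> measurable (measure_pmf Q) borel" by simp
  have sets_m: "sets m = sets borel" by (simp add: m_def)
  have space_m: "space m = UNIV" by (simp add: m_def)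
  have prob_m: "prob_space m" unfolding m_def by (rule prob_space.prob_space_distr[OF prob_space_measure_pmf msc])
  have fin_m: "finite_measure m" using prob_space.finite_measure[OF prob_m] .
  define B where "B = cball 0 (\<epsilon> * sqrt (real CARD('n))) \<inter> (unit_box :: (real^'n) set)"
  have Bmeas: "UNIV - B \<in> sets borel"
  proof -
    have ub: "(unit_box :: (real^'n) set) \<in> sets borel" unfolding unit_box_def by measurable
    have "B \<in> sets borel" unfolding B_def using ub by (intro sets.Int) auto
    then show ?thesis by (metis sets.compl_sets space_borel)
  qed
  have inB: "\<epsilon> *\<^sub>R x \<in> B" if "x \<in> cube" for x
  proof -
    have "norm (\<epsilon> *\<^sub>R x) = \<epsilon> * sqrt (real CARD('n))" using cube_norm[OF that] e by simp
    moreover have "\<epsilon> *\<^sub>R x \<in> unit_box"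
    proof -
      have "\<bar>\<epsilon> * x $ i\<bar> \<le> 1" for i using cube_abs[OF that, of i] e by (simp add: abs_mult)
      then show ?thesis by (auto simp: unit_box_def abs_le_iff)
    qed
    ultimately show ?thesis by (simp add: B_def)
  qed
  have supp_m: "emeasure m (UNIV - B) = 0"
  proof -
    have "emeasure m (UNIV - B) = emeasure (measure_pmf Q) ((\<lambda>x. \<epsilon> *\<^sub>R x) -` (UNIV - B) \<inter> space (measure_pmf Q))"
      unfolding m_def by (rule emeasure_distr[OF msc Bmeas])
    also have "\<dots> = ennreal (measure (measure_pmf Q) ((\<lambda>x. \<epsilon> *\<^sub>R x) -` (UNIV - B)))"
      by (simp add: measure_pmf.emeasure_eq_measure)
    also have "measure (measure_pmf Q) ((\<lambda>x. \<epsilon> *\<^sub>R x) -` (UNIV - B)) = 0"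
      unfolding measure_pmf_zero_iff using setQ inB by auto
    finally show ?thesis by simp
  qed
  have ident: "(\<Sum>y\<in>cube. \<phi> y * pmf \<nu> y) = (\<integral>\<theta>. (\<Sum>y\<in>cube. \<phi> y * tilt \<theta> (pmf \<nu>) y) \<partial>m)" for \<phi> :: "real^'n \<Rightarrow> real"
  proof -
    have mi: "(\<lambda>\<theta>. \<Sum>y\<in>cube. \<phi> y * tilt \<theta> (pmf \<nu>) y) \<in> borel_measurable borel" by measurable
    have "(\<integral>\<theta>. (\<Sum>y\<in>cube. \<phi> y * tilt \<theta> (pmf \<nu>) y) \<partial>m) = (\<integral>x. (\<Sum>y\<in>cube. \<phi> y * tilt (\<epsilon> *\<^sub>R x) p y) \<partial>measure_pmf Q)"
      unfolding m_def p_def by (rule integral_distr[OF msc mi])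
    also have "\<dots> = (\<Sum>x\<in>cube. (\<Sum>y\<in>cube. \<phi> y * tilt (\<epsilon> *\<^sub>R x) p y) * pmf Q x)"
      by (rule integral_measure_pmf_real) (use setQ in auto)
    also have "\<dots> = (\<Sum>x\<in>cube. \<Sum>y\<in>cube. \<phi> y * (WW \<epsilon> p x * tilt (\<epsilon> *\<^sub>R x) p y))"
      by (intro sum.cong refl) (simp add: pmfQ f_def sum_distrib_left sum_distrib_right mult_ac)
    also have "\<dots> = (\<Sum>x\<in>cube. \<Sum>y\<in>cube. \<phi> y * (p y * kap \<epsilon> x y))"
      by (simp add: WW_tilt[OF nn s1 sp])
    also have "\<dots> = (\<Sum>y\<in>cube. \<phi> y * p y * (\<Sum>x\<in>cube. kap \<epsilon> x y))"
      by (subst sum.swap) (simp add: sum_distrib_left mult_ac)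
    also have "\<dots> = (\<Sum>y\<in>cube. \<phi> y * p y)"
      by (intro sum.cong refl) (metis kap_sum mult_1_right)
    finally show ?thesis by (simp add: p_def)
  qed
  have mbound: "measure m {\<theta>\<in>space m. Trk k (Hcov (tilt \<theta> (pmf \<nu>))) \<le> 2^8 * \<alpha> * D / \<epsilon>} \<ge> 1 - 1/\<alpha>" for k
  proof -
    define c where "c = 2^8 * \<alpha> * D / \<epsilon>"
    define P where "P = {\<theta>. Trk k (Hcov (tilt \<theta> (pmf \<nu>))) \<le> c}"
    have Pm: "P \<in> sets borel" unfolding P_def by (rule Trk_set_meas)
    define tr where "tr = (\<lambda>x. \<Sum>i\<in>UNIV. Hcov (tilt (\<epsilon> *\<^sub>R x) p) $ i $ i)"
    have tr0: "tr x \<ge> 0" and Trk_tr: "Trk k (Hcov (tilt (\<epsilon> *\<^sub>R x) p)) \<le> tr x" for x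
    proof -
      have Z: "(\<Sum>z\<in>cube. p z * exp ((\<epsilon> *\<^sub>R x) \<bullet> z)) > 0" by (rule Z_pos[OF nn s1])
      show "tr x \<ge> 0" unfolding tr_def using H_diag(1)[OF nn Z] by (intro sum_nonneg) auto
      show "Trk k (Hcov (tilt (\<epsilon> *\<^sub>R x) p)) \<le> tr x" unfolding tr_def
        by (rule Trk_le_trace) (rule H_diag(1)[OF nn Z])
    qed
    have Ebd: "(\<Sum>x\<in>cube. WW \<epsilon> p x * tr x) \<le> c / \<alpha>"
      using E_bound[OF supp e] al unfolding tr_def c_def p_def D_def by (simp add: field_simps)
    define T where "T = {x. \<not> (\<epsilon> *\<^sub>R x \<in> P)} \<inter> set_pmf Q"
    have "measure m {\<theta>\<in>space m. Trk k (Hcov (tilt \<theta> (pmf \<nu>))) \<le> c} = measure m P"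
      unfolding space_m P_def by simp
    also have "\<dots> = measure (measure_pmf Q) ((\<lambda>x. \<epsilon> *\<^sub>R x) -` P \<inter> space (measure_pmf Q))"
      unfolding m_def by (rule measure_distr[OF msc Pm])
    also have "\<dots> = 1 - measure (measure_pmf Q) {x. \<not> (\<epsilon> *\<^sub>R x \<in> P)}"
    proof -
      have "measure (measure_pmf Q) {x. \<not> (\<epsilon> *\<^sub>R x \<in> P)} = measure (measure_pmf Q) (space (measure_pmf Q) - ((\<lambda>x. \<epsilon> *\<^sub>R x) -` P \<inter> space (measure_pmf Q)))"
        by (rule arg_cong[where f="measure (measure_pmf Q)"]) auto
      also have "\<dots> = 1 - measure (measure_pmf Q) ((\<lambda>x. \<epsilon> *\<^sub>R x) -` P \<inter> space (measure_pmf Q))"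
        by (rule measure_pmf.prob_compl) simp
      finally show ?thesis by simp
    qed
    also have "measure (measure_pmf Q) {x. \<not> (\<epsilon> *\<^sub>R x \<in> P)} = (\<Sum>x\<in>T. WW \<epsilon> p x)"
    proof -
      have finT: "finite T" unfolding T_def using finite_subset[OF setQ finite_cube] by auto
      have "measure (measure_pmf Q) {x. \<not> (\<epsilon> *\<^sub>R x \<in> P)} = measure (measure_pmf Q) T"
        unfolding T_def by (rule measure_Int_set_pmf[symmetric])
      also have "\<dots> = (\<Sum>x\<in>T. pmf Q x)" by (rule measure_measure_pmf_finite[OF finT])
      also have "\<dots> = (\<Sum>x\<in>T. WW \<epsilon> p x)"
        using setQ by (intro sum.cong refl) (auto simp: T_def pmfQ f_def)
      finally show ?thesis .
    qed
    finally have meq: "measure m {\<theta>\<in>space m. Trk k (Hcov (tilt \<theta> (pmf \<nu>))) \<le> c} = 1 - (\<Sum>x\<in>T. WW \<epsilon> p x)" .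
    have "(\<Sum>x\<in>T. WW \<epsilon> p x) \<le> 1 / \<alpha>"
    proof (rule markov_fin[OF finite_cube _ _ _ _ Ebd])
      show "T \<subseteq> cube" using setQ by (auto simp: T_def)
      show "\<And>x. x \<in> cube \<Longrightarrow> 0 \<le> WW \<epsilon> p x" using WW_nonneg[of p, OF nn] by simp
      show "\<And>x. x \<in> cube \<Longrightarrow> 0 \<le> tr x" using tr0 by simp
      show "c < tr x" if "x \<in> T" for x
      proof -
        have "\<not> Trk k (Hcov (tilt (\<epsilon> *\<^sub>R x) p)) \<le> c" using that by (simp add: T_def P_def p_def)
        then show ?thesis using Trk_tr[of x] by simp
      qed
      show "0 < \<alpha>" using al by simp
    qed
    then show ?thesis using meq unfolding c_def by simp
  qed
  have n0: "1 / real CARD('n) \<ge> 0" by simp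
  show "let n = real CARD('n); D = GW (gvec (pmf \<nu>) ` cube) in
     (\<exists>m :: (real^'n) measure.
        sets m = sets borel \<and> finite_measure m \<and>
        emeasure m (UNIV - (cball 0 (\<epsilon> * sqrt n) \<inter> unit_box)) = 0 \<and>
        (\<forall>\<phi> :: real^'n \<Rightarrow> real.
           (\<Sum>y\<in>cube. \<phi> y * pmf \<nu> y)
             = (\<integral>\<theta>. (\<Sum>y\<in>cube. \<phi> y * tilt \<theta> (pmf \<nu>) y) \<partial>m)) \<and>
        measure m {\<theta>\<in>space m. Trk (2 * n * exp (- 1 / (32 * \<epsilon>\<^sup>2))) (Hcov (tilt \<theta> (pmf \<nu>)))
                                 \<le> 2^8 * \<alpha> * D / \<epsilon>} \<ge> 1 - 1/\<alpha> - 1/n \<and>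
        (0 < D \<and> \<epsilon> \<le> 1 / (8 * sqrt (ln (4 * n / D))) \<longrightarrow>
          measure m {\<theta>\<in>space m. Trk 1 (Hcov (tilt \<theta> (pmf \<nu>))) \<le> 2^8 * \<alpha> * D / \<epsilon>}
            \<ge> 1 - 1/\<alpha> - 1/n))"
    unfolding Let_def D_def[symmetric]
  proof (intro exI[of _ m] conjI allI impI)
    show "sets m = sets borel" by (rule sets_m)
    show "finite_measure m" by (rule fin_m)
    show "emeasure m (UNIV - (cball 0 (\<epsilon> * sqrt (real CARD('n))) \<inter> unit_box)) = 0"
      using supp_m by (simp add: B_def)
    show "(\<Sum>y\<in>cube. \<phi> y * pmf \<nu> y) = (\<integral>\<theta>. (\<Sum>y\<in>cube. \<phi> y * tilt \<theta> (pmf \<nu>) y) \<partial>m)" for \<phi>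
      by (rule ident)
    show "1 - 1/\<alpha> - 1 / real CARD('n) \<le> measure m {\<theta>\<in>space m. Trk (2 * real CARD('n) * exp (- 1 / (32 * \<epsilon>\<^sup>2))) (Hcov (tilt \<theta> (pmf \<nu>))) \<le> 2^8 * \<alpha> * D / \<epsilon>}"
      using mbound[of "2 * real CARD('n) * exp (- 1 / (32 * \<epsilon>\<^sup>2))"] n0 by linarith
    show "1 - 1/\<alpha> - 1 / real CARD('n) \<le> measure m {\<theta>\<in>space m. Trk 1 (Hcov (tilt \<theta> (pmf \<nu>))) \<le> 2^8 * \<alpha> * D / \<epsilon>}"
      using mbound[of 1] n0 by linarith
  qed
qed


end
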